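(* Let the data model, network assumptions, and running consensus algorithm below hold. Then for every node $i\in\{1,\dots,N\}$ and each $l\in\{0,1\}$, the sequence of laws of $x_i(k)$ under $H_l$, $k=1,2,\dots$, satisfies the large deviations principle with good rate function $$I_{(l)}(t)=\frac{(t-m_L^{(l)})^2}{2\sigma_L^2},$$ where $m_L^{(l)}=\frac{(-1)^{l+1}}{2}(m_1-m_0)^\top S^{-1}(m_1-m_0)$ and $\sigma_L^2=(m_1-m_0)^\top S^{-1}(m_1-m_0)$ (the same rate function as for the centralized detector $\frac1k\sum_{j\le k}L(j)$).
   Context: Data model: $N$ sensors; at each time $k=1,2,\dots$ the observation vector is $y(k)=(y_1(k),\dots,y_N(k))^\top$ with $y(k)=m_l+\zeta(k)$ under $H_l$, $l=0,1$, where $m_0\ne m_1\in\mathbb{R}^N$ are constant and $\{\zeta(k)\}$ is i.i.d. $\mathcal{N}(0,S)$ with $S$ positive definite. Let $v=S^{-1}(m_1-m_0)$ and $\eta_i(k)=v_i\big(y_i(k)-\frac{[m_1]_i+[m_0]_i}{2}\big)$, $\eta(k)=(\eta_1(k),\dots,\eta_N(k))^\top$ (so $\sum_i\eta_i(k)=(m_1-m_0)^\top S^{-1}(y(k)-\frac{m_1+m_0}{2})$). Network assumptions: $\{W(k)\}_{k\ge1}$ is a deterministic sequence of $N\times N$ matrices such that (1) each $W(k)$ is symmetric and stochastic (nonnegative entries, rows summing to $1$); (2) there is $W_{\min}\in(0,1)$ with $W_{ii}(k)\ge W_{\min}$ for all $i,k$, and $W_{ij}(k)\ge W_{\min}$ whenever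 $i\ne j$ and $W_{ij}(k)>0$; (3) letting $\mathcal{E}(k)=\{\{i,j\}: i<j,\ W_{ij}(k)>0\}$, there is an integer $B\ge1$ such that for every $k$ the undirected graph on $\{1,\dots,N\}$ with edge set $\bigcup_{l=k+1}^{k+B}\mathcal{E}(l)$ is connected. Running consensus algorithm: $x(1)=N\eta(1)$ and $x(k+1)=\frac{k}{k+1}W(k)x(k)+\frac{1}{k+1}N\eta(k+1)$ for $k\ge1$, where $x(k)=(x_1(k),\dots,x_N(k))^\top$. LDP: a sequence of probability measures $\{\theta_k\}$ on $\mathbb{R}$ satisfies the LDP with rate function $\mathcal{J}$ if for every closed $F$, $\limsup_k\frac1k\log\theta_k(F)\le-\inf_F\mathcal{J}$, and for every open $G$, $\liminf_k\frac1k\log\theta_k(G)\ge-\inf_G\mathcal{J}$; it is good if sublevel sets of $\mathcal{J}$ are compact. *)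

theory Defs
  imports "HOL-Probability.Probability"
begin

text \<open>Sensors are indexed by a finite type 'n, so N = CARD('n).\<close>

definition pos_def_mat :: "real^'n^'n \<Rightarrow> bool" where
  "pos_def_mat S \<longleftrightarrow> transpose S = S \<and> (\<forall>x. x \<noteq> 0 \<longrightarrow> x \<bullet> (S *v x) > 0)"

definition gauss_density :: "real^'n^'n \<Rightarrow> real^'n \<Rightarrow> real" where
  "gauss_density S x =
     exp (- (x \<bullet> (matrix_inv S *v x)) / 2) / sqrt ((2 * pi) ^ CARD('n) * det S)"

definition eta_vec :: "real^'n^'n \<Rightarrow> real^'n \<Rightarrow> real^'n \<Rightarrow> real^'n \<Rightarrow> real^'n" where
  "eta_vec S m0 m1 y =
     (\<chi> i. (matrix_inv S *v (m1 - m0)) $ i * (y $ i - (m1 $ i + m0 $ i) / 2))"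

text \<open>Running consensus: rcons W e k = x(k) for k \<ge> 1 (value at k = 0 is a dummy).\<close>
fun rcons :: "(nat \<Rightarrow> real^'n^'n) \<Rightarrow> (nat \<Rightarrow> real^'n) \<Rightarrow> nat \<Rightarrow> real^'n" where
  "rcons W e 0 = 0"
| "rcons W e (Suc 0) = real CARD('n) *\<^sub>R e 1"
| "rcons W e (Suc (Suc k)) =
     (real (Suc k) / real (Suc (Suc k))) *\<^sub>R (W (Suc k) *v rcons W e (Suc k))
     + (1 / real (Suc (Suc k))) *\<^sub>R (real CARD('n) *\<^sub>R e (Suc (Suc k)))"

text \<open>Large deviations principle for a sequence of probability measures on the reals.
  Log-probabilities are taken in ereal, with log 0 = -infinity.\<close>
definition log_prob_rate :: "real measure \<Rightarrow> nat \<Rightarrow> real set \<Rightarrow> ereal" where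
  "log_prob_rate \<theta> k A =
     (if measure \<theta> A = 0 then - \<infinity> else ereal (ln (measure \<theta> A) / real k))"

definition satisfies_LDP :: "(nat \<Rightarrow> real measure) \<Rightarrow> (real \<Rightarrow> real) \<Rightarrow> bool" where
  "satisfies_LDP \<theta> J \<longleftrightarrow>
     (\<forall>F. closed F \<longrightarrow>
        limsup (\<lambda>k. log_prob_rate (\<theta> k) k F) \<le> - (INF t\<in>F. ereal (J t))) \<and>
     (\<forall>G. open G \<longrightarrow>
        liminf (\<lambda>k. log_prob_rate (\<theta> k) k G) \<ge> - (INF t\<in>G. ereal (J t)))"

definition good_rate_function :: "(real \<Rightarrow> real) \<Rightarrow> bool" where
  "good_rate_function J \<longleftrightarrow> (\<forall>c. compact {t. J t \<le> c})"

end

theory Submission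
  imports Defs
begin


lemma limsup_le_lim:
  fixes q :: "nat \<Rightarrow> ereal"
  assumes "eventually (\<lambda>k. q k \<le> ereal (u k)) sequentially" "u \<longlonglongrightarrow> L"
  shows "limsup q \<le> ereal L"
proof -
  have "limsup q \<le> limsup (\<lambda>k. ereal (u k))" by (rule Limsup_mono[OF assms(1)])
  also have "\<dots> = ereal L" using assms(2) by (intro lim_imp_Limsup) auto
  finally show ?thesis .
qed

lemma liminf_ge_lim:
  fixes q :: "nat \<Rightarrow> ereal"
  assumes "eventually (\<lambda>k. ereal (u k) \<le> q k) sequentially" "u \<longlonglongrightarrow> L"
  shows "ereal L \<le> liminf q"
proof -
  have "ereal L = liminf (\<lambda>k. ereal (u k))" using assms(2) by (intro lim_imp_Liminf[symmetric]) auto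
  also have "\<dots> \<le> liminf q" by (rule Liminf_mono[OF assms(1)])
  finally show ?thesis .
qed

lemma prob_le_integral:
  assumes "prob_space M" "A \<in> sets M" "integrable M f" "\<And>\<omega>. \<omega> \<in> space M \<Longrightarrow> indicator A \<omega> \<le> f \<omega>"
  shows "measure M A \<le> integral\<^sup>L M f"
proof -
  interpret prob_space M by fact
  have "measure M A = integral\<^sup>L M (indicator A)"
    using assms(2) sets.sets_into_space by (simp add: Int_absorb2)
  also have "\<dots> \<le> integral\<^sup>L M f"
    using assms by (intro integral_mono) (auto simp: integrable_indicator_iff less_top[symmetric])
  finally show ?thesis .
qed

lemma upper_tail:
  assumes P: "prob_space M" and Xm: "X \<in> borel_measurable M"
    and int: "integrable M (\<lambda>\<omega>. exp (lam * X \<omega>))" and lam: "0 \<le> lam"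
  shows "measure M {\<omega>\<in>space M. u \<le> X \<omega>} \<le> exp (- lam * u) * (\<integral>\<omega>. exp (lam * X \<omega>) \<partial>M)"
proof -
  have "measure M {\<omega>\<in>space M. u \<le> X \<omega>} \<le> (\<integral>\<omega>. exp (- lam * u) * exp (lam * X \<omega>) \<partial>M)"
  proof (rule prob_le_integral[OF P])
    show "{\<omega>\<in>space M. u \<le> X \<omega>} \<in> sets M" using Xm by measurable
    show "integrable M (\<lambda>\<omega>. exp (- lam * u) * exp (lam * X \<omega>))" using int by simp
    fix \<omega> assume "\<omega> \<in> space M"
    show "indicator {\<omega>\<in>space M. u \<le> X \<omega>} \<omega> \<le> exp (- lam * u) * exp (lam * X \<omega>)"
    proof (cases "u \<le> X \<omega>")
      case True
      have "exp (- lam*u) * exp (lam * X \<omega>) = exp (lam * (X \<omega> - u))"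
        by (simp add: exp_add[symmetric] algebra_simps)
      moreover have "1 \<le> exp (lam*(X \<omega> - u))" using True lam by simp
      ultimately show ?thesis by (simp add: indicator_def)
    qed (simp add: indicator_def)
  qed
  then show ?thesis by simp
qed

lemma lower_tail:
  assumes P: "prob_space M" and Xm: "X \<in> borel_measurable M"
    and int: "integrable M (\<lambda>\<omega>. exp ((- lam) * X \<omega>))" and lam: "0 \<le> lam"
  shows "measure M {\<omega>\<in>space M. X \<omega> \<le> u} \<le> exp (lam * u) * (\<integral>\<omega>. exp ((- lam) * X \<omega>) \<partial>M)"
proof -
  have "measure M {\<omega>\<in>space M. - u \<le> - X \<omega>} \<le> exp (- lam * (-u)) * (\<integral>\<omega>. exp (lam * (- X \<omega>)) \<partial>M)"
    using upper_tail[OF P _ _ lam, of "\<lambda>\<omega>. - X \<omega>" "-u"] Xm int by simp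
  then show ?thesis by simp
qed

definition Irate :: "real \<Rightarrow> real \<Rightarrow> real \<Rightarrow> real" where
  "Irate m \<sigma>2 t = (t - m)^2 / (2 * \<sigma>2)"

locale mgf_ctx =
  fixes M :: "'w measure" and X :: "nat \<Rightarrow> 'w \<Rightarrow> real" and a s :: "nat \<Rightarrow> real"
    and m \<sigma>2 :: real
  assumes P: "prob_space M" and Xm: "\<And>k. X k \<in> borel_measurable M"
    and mgf_int: "\<And>k lam. k \<ge> 1 \<Longrightarrow> integrable M (\<lambda>\<omega>. exp (lam * X k \<omega>))"
    and mgf: "\<And>k lam. k \<ge> 1 \<Longrightarrow> (\<integral>\<omega>. exp (lam * X k \<omega>) \<partial>M) = exp (lam * a k + lam^2 * s k / 2)"
    and a_lim: "a \<longlonglongrightarrow> m" and s_lim: "(\<lambda>k. real k * s k) \<longlonglongrightarrow> \<sigma>2" and \<sigma>pos: "\<sigma>2 > 0"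
begin

abbreviation "I \<equiv> Irate m \<sigma>2"

lemma I_nonneg: "I t \<ge> 0" using \<sigma>pos by (simp add: Irate_def)

lemma measure_distr_X: "A \<in> sets borel \<Longrightarrow>
   measure (distr M borel (X k)) A = measure M {\<omega>\<in>space M. X k \<omega> \<in> A}"
  using Xm by (subst measure_distr) (auto simp: vimage_def Int_def conj_commute)

lemma upper_bound:
  assumes "closed F"
  shows "limsup (\<lambda>k. log_prob_rate (distr M borel (X k)) k F) \<le> - (INF t\<in>F. ereal (I t))"
proof (cases "F = {}")
  case True
  then show ?thesis by (simp add: log_prob_rate_def Limsup_const)
next
  case False
  interpret prob_space M by (rule P)
  define c where "c = Inf (I ` F)"
  have bdd: "bdd_below (I ` F)" using I_nonneg by (intro bdd_belowI[of _ 0]) auto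
  have INFeq: "(INF t\<in>F. ereal (I t)) = ereal c"
    using ereal_Inf'[OF bdd] False by (simp add: c_def image_comp)
  have c0: "c \<ge> 0" unfolding c_def using False I_nonneg by (auto intro: cInf_greatest)
  have cle: "\<And>t. t\<in>F \<Longrightarrow> c \<le> I t" unfolding c_def using bdd by (auto intro: cInf_lower)
  define r where "r = sqrt (2*\<sigma>2*c)"
  define th where "th = r/\<sigma>2"
  have r0: "r \<ge> 0" using c0 \<sigma>pos by (simp add: r_def)
  have r2: "r^2 = 2*\<sigma>2*c" using c0 \<sigma>pos by (simp add: r_def)
  have th0: "th \<ge> 0" using r0 \<sigma>pos by (simp add: th_def)
  have Fsub: "m + r \<le> t \<or> t \<le> m - r" if "t \<in> F" for t
  proof -
    have "c \<le> (t-m)^2/(2*\<sigma>2)" using cle[OF that] by (simp add: Irate_def)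
    then have "r^2 \<le> (t-m)^2" using \<sigma>pos r2 by (simp add: field_simps)
    then have "\<bar>r\<bar> \<le> \<bar>t-m\<bar>" by (simp add: abs_le_square_iff)
    then show ?thesis using r0 by (cases "t \<ge> m") auto
  qed
  define e1 where "e1 k = th*(a k - m) + th^2*(real k * s k)/2 - th*r" for k
  define e2 where "e2 k = - th*(a k - m) + th^2*(real k * s k)/2 - th*r" for k
  have lim0: "th^2*\<sigma>2/2 - th*r = -c" using \<sigma>pos r2 by (simp add: th_def field_simps power2_eq_square)
  have e1_lim: "e1 \<longlonglongrightarrow> -c"
  proof -
    have "e1 \<longlonglongrightarrow> th*(m - m) + th^2*\<sigma>2/2 - th*r"
      unfolding e1_def by (intro tendsto_intros a_lim s_lim) auto
    then show ?thesis using lim0 by simp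
  qed
  have e2_lim: "e2 \<longlonglongrightarrow> -c"
  proof -
    have "e2 \<longlonglongrightarrow> - th*(m - m) + th^2*\<sigma>2/2 - th*r"
      unfolding e2_def by (intro tendsto_intros a_lim s_lim) auto
    then show ?thesis using lim0 by simp
  qed
  have bound: "measure M {\<omega>\<in>space M. X k \<omega> \<in> F} \<le> exp (real k * e1 k) + exp (real k * e2 k)"
    if k1: "k \<ge> 1" for k
  proof -
    have sub: "{\<omega>\<in>space M. X k \<omega> \<in> F} \<subseteq> {\<omega>\<in>space M. m + r \<le> X k \<omega>} \<union> {\<omega>\<in>space M. X k \<omega> \<le> m - r}"
      using Fsub by auto
    have meas: "{\<omega>\<in>space M. m + r \<le> X k \<omega>} \<in> sets M" "{\<omega>\<in>space M. X k \<omega> \<le> m - r} \<in> sets M"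
      using Xm[of k] by measurable
    have "measure M {\<omega>\<in>space M. X k \<omega> \<in> F} \<le> measure M ({\<omega>\<in>space M. m + r \<le> X k \<omega>} \<union> {\<omega>\<in>space M. X k \<omega> \<le> m - r})"
      using sub meas by (intro finite_measure_mono) auto
    also have "\<dots> \<le> measure M {\<omega>\<in>space M. m + r \<le> X k \<omega>} + measure M {\<omega>\<in>space M. X k \<omega> \<le> m - r}"
      using meas by (intro measure_Un_le) auto
    also have "measure M {\<omega>\<in>space M. m + r \<le> X k \<omega>} \<le> exp (- (real k * th) * (m+r)) * (\<integral>\<omega>. exp ((real k * th) * X k \<omega>) \<partial>M)"
      using th0 by (intro upper_tail[OF P Xm mgf_int[OF k1]]) simp
    also have "\<dots> = exp (real k * e1 k)"
      unfolding mgf[OF k1] e1_def mult_exp_exp by (simp add: field_simps power2_eq_square)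
    also have "measure M {\<omega>\<in>space M. X k \<omega> \<le> m - r} \<le> exp ((real k * th) * (m-r)) * (\<integral>\<omega>. exp ((- (real k * th)) * X k \<omega>) \<partial>M)"
      using th0 by (intro lower_tail[OF P Xm mgf_int[OF k1]]) simp
    also have "\<dots> = exp (real k * e2 k)"
      unfolding mgf[OF k1] e2_def mult_exp_exp by (simp add: field_simps power2_eq_square)
    finally show ?thesis by simp
  qed
  have ev: "eventually (\<lambda>k. log_prob_rate (distr M borel (X k)) k F \<le> ereal (ln 2 / real k + max (e1 k) (e2 k))) sequentially"
    unfolding eventually_sequentially
  proof (intro exI allI impI)
    fix k :: nat assume k1: "k \<ge> 1"
    have Fb: "F \<in> sets borel" using assms by (simp add: borel_closed)
    define p where "p = measure M {\<omega>\<in>space M. X k \<omega> \<in> F}"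
    have "p \<le> exp (real k * e1 k) + exp (real k * e2 k)" using bound[OF k1] by (simp add: p_def)
    also have "\<dots> \<le> 2 * exp (real k * max (e1 k) (e2 k))"
    proof -
      have "real k * e1 k \<le> real k * max (e1 k) (e2 k)" "real k * e2 k \<le> real k * max (e1 k) (e2 k)"
        by (intro mult_left_mono; simp)+
      then have "exp (real k * e1 k) \<le> exp (real k * max (e1 k) (e2 k))" "exp (real k * e2 k) \<le> exp (real k * max (e1 k) (e2 k))"
        by simp_all
      then show ?thesis by linarith
    qed
    finally have pb: "p \<le> 2 * exp (real k * max (e1 k) (e2 k))" .
    show "log_prob_rate (distr M borel (X k)) k F \<le> ereal (ln 2 / real k + max (e1 k) (e2 k))"
    proof (cases "p = 0")
      case True then show ?thesis by (simp add: log_prob_rate_def measure_distr_X[OF Fb] p_def)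
    next
      case False
      then have pp: "p > 0" using measure_nonneg[of M] by (simp add: p_def less_le)
      have "ln p \<le> ln (2 * exp (real k * max (e1 k) (e2 k)))" using pp pb by simp
      also have "\<dots> = ln 2 + real k * max (e1 k) (e2 k)" by (simp add: ln_mult)
      finally have "ln p / real k \<le> ln 2 / real k + max (e1 k) (e2 k)"
        using k1 by (simp add: divide_simps mult.commute)
      then show ?thesis using False by (simp add: log_prob_rate_def measure_distr_X[OF Fb] p_def)
    qed
  qed
  have lim: "(\<lambda>k. ln 2 / real k + max (e1 k) (e2 k)) \<longlonglongrightarrow> 0 + max (-c) (-c)"
    by (intro tendsto_intros e1_lim e2_lim tendsto_divide_0[OF tendsto_const] filterlim_real_sequentially)
  have "limsup (\<lambda>k. log_prob_rate (distr M borel (X k)) k F) \<le> ereal (-c)"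
    using limsup_le_lim[OF ev lim] by simp
  then show ?thesis using INFeq by simp
qed

lemma lower_point:
  assumes "open G" "t \<in> G" "\<epsilon> > 0"
  shows "ereal (- I t - \<epsilon>) \<le> liminf (\<lambda>k. log_prob_rate (distr M borel (X k)) k G)"
proof -
  interpret prob_space M by (rule P)
  obtain \<delta>0 where d0: "\<delta>0 > 0" "ball t \<delta>0 \<subseteq> G" using assms open_contains_ball by blast
  define th where "th = (t - m)/\<sigma>2"
  define \<delta> where "\<delta> = min \<delta>0 (\<epsilon> / (\<bar>th\<bar> + 1))"
  have dpos: "\<delta> > 0" using d0 assms by (simp add: \<delta>_def)
  have dle: "\<delta> \<le> \<delta>0" by (simp add: \<delta>_def)
  have the: "\<bar>th\<bar> * \<delta> \<le> \<epsilon>"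
  proof -
    have "\<bar>th\<bar> * \<delta> \<le> \<bar>th\<bar> * (\<epsilon> / (\<bar>th\<bar> + 1))" by (intro mult_left_mono) (auto simp: \<delta>_def)
    also have "\<dots> \<le> \<epsilon>" using assms by (simp add: field_simps)
    finally show ?thesis .
  qed
  define \<eta> where "\<eta> = \<delta>/\<sigma>2"
  have etapos: "\<eta> > 0" using dpos \<sigma>pos by (simp add: \<eta>_def)
  define \<kappa> where "\<kappa> = \<delta>^2/(2*\<sigma>2)"
  have kpos: "\<kappa> > 0" using dpos \<sigma>pos by (simp add: \<kappa>_def)
  define al where "al k = th * a k + th^2 * (real k * s k)/2" for k
  define be where "be k = (th+\<eta>) * a k + (th+\<eta>)^2 * (real k * s k)/2 - \<eta>*(t+\<delta>)" for k
  define ga where "ga k = (th-\<eta>) * a k + (th-\<eta>)^2 * (real k * s k)/2 + \<eta>*(t-\<delta>)" for k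
  have al_lim: "al \<longlonglongrightarrow> th * m + th^2 * \<sigma>2 / 2"
    unfolding al_def by (intro tendsto_intros a_lim s_lim) auto
  have eq1: "(th+\<eta>) * m + (th+\<eta>)^2 * \<sigma>2/2 - \<eta>*(t+\<delta>) - (th * m + th^2 * \<sigma>2 / 2) = - \<kappa>"
    using \<sigma>pos by (simp add: th_def \<eta>_def \<kappa>_def field_simps power2_eq_square)
  have eq2: "(th-\<eta>) * m + (th-\<eta>)^2 * \<sigma>2/2 + \<eta>*(t-\<delta>) - (th * m + th^2 * \<sigma>2 / 2) = - \<kappa>"
    using \<sigma>pos by (simp add: th_def \<eta>_def \<kappa>_def field_simps power2_eq_square)
  have bd_lim: "(\<lambda>k. be k - al k) \<longlonglongrightarrow> - \<kappa>"
  proof -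
    have "(\<lambda>k. be k - al k) \<longlonglongrightarrow> (th+\<eta>) * m + (th+\<eta>)^2 * \<sigma>2/2 - \<eta>*(t+\<delta>) - (th * m + th^2 * \<sigma>2 / 2)"
      unfolding al_def be_def by (intro tendsto_intros a_lim s_lim) auto
    then show ?thesis using eq1 by simp
  qed
  have gd_lim: "(\<lambda>k. ga k - al k) \<longlonglongrightarrow> - \<kappa>"
  proof -
    have "(\<lambda>k. ga k - al k) \<longlonglongrightarrow> (th-\<eta>) * m + (th-\<eta>)^2 * \<sigma>2/2 + \<eta>*(t-\<delta>) - (th * m + th^2 * \<sigma>2 / 2)"
      unfolding al_def ga_def by (intro tendsto_intros a_lim s_lim) auto
    then show ?thesis using eq2 by simp
  qed
  have ev1: "eventually (\<lambda>k. be k - al k < - \<kappa>/2) sequentially"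
    using order_tendstoD(2)[OF bd_lim] kpos by simp
  have ev2: "eventually (\<lambda>k. ga k - al k < - \<kappa>/2) sequentially"
    using order_tendstoD(2)[OF gd_lim] kpos by simp
  obtain K :: nat where K: "real K > 2 * ln 4 / \<kappa>" using reals_Archimedean2 by blast
  have ev3: "eventually (\<lambda>k. k \<ge> max K 1) sequentially" by (rule eventually_ge_at_top)
  have main: "exp (real k * al k) \<le> exp (real k * (th * t + \<bar>th\<bar> * \<delta>)) * measure M {\<omega>\<in>space M. t - \<delta> < X k \<omega> \<and> X k \<omega> < t + \<delta>}
        + exp (real k * be k) + exp (real k * ga k)" if k1: "k \<ge> 1" for k
  proof -
    define SA where "SA = {\<omega>\<in>space M. t - \<delta> < X k \<omega> \<and> X k \<omega> < t + \<delta>}"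
    have SAm: "SA \<in> sets M" unfolding SA_def using Xm[of k] by measurable
    define C where "C = exp (real k * (th * t + \<bar>th\<bar> * \<delta>))"
    define f where "f \<omega> = C * indicator SA \<omega> + exp (- (real k * \<eta>) * (t+\<delta>)) * exp ((real k * (th+\<eta>)) * X k \<omega>)
        + exp ((real k * \<eta>) * (t-\<delta>)) * exp ((real k * (th-\<eta>)) * X k \<omega>)" for \<omega>
    have int1: "integrable M (\<lambda>\<omega>. C * indicator SA \<omega>)"
      using SAm by (intro integrable_mult_right) (auto simp: integrable_indicator_iff less_top[symmetric])
    have int2: "integrable M (\<lambda>\<omega>. exp (- (real k * \<eta>) * (t+\<delta>)) * exp ((real k * (th+\<eta>)) * X k \<omega>))"
      by (intro integrable_mult_right mgf_int[OF k1])
    have int3: "integrable M (\<lambda>\<omega>. exp ((real k * \<eta>) * (t-\<delta>)) * exp ((real k * (th-\<eta>)) * X k \<omega>))"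
      by (intro integrable_mult_right mgf_int[OF k1])
    have fint: "integrable M f" unfolding f_def
      by (intro Bochner_Integration.integrable_add int1 int2 int3)
    have pw: "exp ((real k * th) * X k \<omega>) \<le> f \<omega>" if "\<omega> \<in> space M" for \<omega>
    proof -
      have C0: "0 \<le> C" by (simp add: C_def)
      have ind0: "0 \<le> C * indicator SA \<omega>" using C0 by simp
      have e1: "exp ((real k * th) * X k \<omega>) \<le> exp (- (real k * \<eta>) * (t+\<delta>)) * exp ((real k * (th+\<eta>)) * X k \<omega>)"
        if "t + \<delta> \<le> X k \<omega>"
      proof -
        have "(real k * th) * X k \<omega> \<le> - (real k * \<eta>) * (t+\<delta>) + (real k * (th+\<eta>)) * X k \<omega>"
        proof -
          have h: "0 \<le> (real k * \<eta>) * (X k \<omega> - (t+\<delta>))" using that etapos by simp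
          then show ?thesis by (simp add: algebra_simps)
        qed
        then show ?thesis by (simp add: mult_exp_exp)
      qed
      have e2: "exp ((real k * th) * X k \<omega>) \<le> exp ((real k * \<eta>) * (t-\<delta>)) * exp ((real k * (th-\<eta>)) * X k \<omega>)"
        if "X k \<omega> \<le> t - \<delta>"
      proof -
        have "(real k * th) * X k \<omega> \<le> (real k * \<eta>) * (t-\<delta>) + (real k * (th-\<eta>)) * X k \<omega>"
        proof -
          have h: "0 \<le> (real k * \<eta>) * ((t-\<delta>) - X k \<omega>)" using that etapos by simp
          then show ?thesis by (simp add: algebra_simps)
        qed
        then show ?thesis by (simp add: mult_exp_exp)
      qed
      show ?thesis
      proof (cases "\<omega> \<in> SA")
        case True
        then have "\<bar>X k \<omega> - t\<bar> < \<delta>" by (auto simp: SA_def)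
        then have "th * X k \<omega> \<le> th * t + \<bar>th\<bar> * \<delta>"
        proof -
          have "th * X k \<omega> - th * t = th * (X k \<omega> - t)" by (simp add: algebra_simps)
          also have "\<dots> \<le> \<bar>th\<bar> * \<bar>X k \<omega> - t\<bar>" by (simp add: abs_mult[symmetric])
          also have "\<dots> \<le> \<bar>th\<bar> * \<delta>" using \<open>\<bar>X k \<omega> - t\<bar> < \<delta>\<close> by (intro mult_left_mono) auto
          finally show ?thesis by simp
        qed
        then have "(real k * th) * X k \<omega> \<le> real k * (th * t + \<bar>th\<bar> * \<delta>)"
          by (simp add: mult.assoc mult_left_mono)
        then have "exp ((real k * th) * X k \<omega>) \<le> C * indicator SA \<omega>" using True by (simp add: C_def)
        moreover have "0 \<le> exp (- (real k * \<eta>) * (t+\<delta>)) * exp ((real k * (th+\<eta>)) * X k \<omega>)" by simp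
        moreover have "0 \<le> exp ((real k * \<eta>) * (t-\<delta>)) * exp ((real k * (th-\<eta>)) * X k \<omega>)" by simp
        ultimately show ?thesis unfolding f_def by linarith
      next
        case False
        then have "t + \<delta> \<le> X k \<omega> \<or> X k \<omega> \<le> t - \<delta>" using that by (auto simp: SA_def)
        then show ?thesis using e1 e2 unfolding f_def using ind0
          by (smt (verit) exp_gt_zero mult_pos_pos)
      qed
    qed
    have "exp (real k * al k) = (\<integral>\<omega>. exp ((real k * th) * X k \<omega>) \<partial>M)"
      unfolding mgf[OF k1] al_def by (simp add: field_simps power2_eq_square)
    also have "\<dots> \<le> integral\<^sup>L M f"
      using pw fint mgf_int[OF k1] by (intro integral_mono) auto
    also have "integral\<^sup>L M f = C * measure M SA + exp (real k * be k) + exp (real k * ga k)"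
    proof -
      have i1: "(\<integral>\<omega>. C * indicator SA \<omega> \<partial>M) = C * measure M SA"
        using SAm sets.sets_into_space by (simp add: Int_absorb2)
      have i2: "(\<integral>\<omega>. exp (- (real k * \<eta>) * (t+\<delta>)) * exp ((real k * (th+\<eta>)) * X k \<omega>) \<partial>M) = exp (real k * be k)"
      proof -
        have "(\<integral>\<omega>. exp (- (real k * \<eta>) * (t+\<delta>)) * exp ((real k * (th+\<eta>)) * X k \<omega>) \<partial>M) = exp (- (real k * \<eta>) * (t+\<delta>)) * exp ((real k * (th+\<eta>)) * a k + (real k * (th+\<eta>))^2 * s k / 2)"
          by (simp only: integral_mult_right_zero mgf[OF k1])
        also have "\<dots> = exp (real k * be k)" unfolding be_def mult_exp_exp by (simp add: field_simps power2_eq_square)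
        finally show ?thesis .
      qed
      have i3: "(\<integral>\<omega>. exp ((real k * \<eta>) * (t-\<delta>)) * exp ((real k * (th-\<eta>)) * X k \<omega>) \<partial>M) = exp (real k * ga k)"
      proof -
        have "(\<integral>\<omega>. exp ((real k * \<eta>) * (t-\<delta>)) * exp ((real k * (th-\<eta>)) * X k \<omega>) \<partial>M) = exp ((real k * \<eta>) * (t-\<delta>)) * exp ((real k * (th-\<eta>)) * a k + (real k * (th-\<eta>))^2 * s k / 2)"
          by (simp only: integral_mult_right_zero mgf[OF k1])
        also have "\<dots> = exp (real k * ga k)" unfolding ga_def mult_exp_exp by (simp add: field_simps power2_eq_square)
        finally show ?thesis .
      qed
      show ?thesis unfolding f_def
        apply (subst Bochner_Integration.integral_add[OF Bochner_Integration.integrable_add[OF int1 int2] int3])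
        apply (subst Bochner_Integration.integral_add[OF int1 int2])
        using i1 i2 i3 by simp
    qed
    finally show ?thesis by (simp add: SA_def C_def)
  qed
  have ev: "eventually (\<lambda>k. ereal (al k - th * t - \<bar>th\<bar> * \<delta> - ln 2 / real k) \<le> log_prob_rate (distr M borel (X k)) k G) sequentially"
    using ev1 ev2 ev3
  proof eventually_elim
    case (elim k)
    then have k1: "k \<ge> 1" and kK: "k \<ge> K" by auto
    have kk: "real k * \<kappa> / 2 \<ge> ln 4"
    proof -
      have "real k \<ge> real K" using kK by simp
      then have "real k > 2 * ln 4 / \<kappa>" using K by linarith
      then show ?thesis using kpos by (simp add: field_simps)
    qed
    have q1: "exp (real k * be k) \<le> exp (real k * al k) / 4"
    proof -
      have "real k * (be k - al k) \<le> real k * (- \<kappa>/2)" using elim k1 by (intro mult_left_mono) auto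
      then have "real k * be k \<le> real k * al k - ln 4" using kk by (simp add: algebra_simps)
      then have "exp (real k * be k) \<le> exp (real k * al k - ln 4)" by simp
      then show ?thesis by (simp add: exp_diff)
    qed
    have q2: "exp (real k * ga k) \<le> exp (real k * al k) / 4"
    proof -
      have "real k * (ga k - al k) \<le> real k * (- \<kappa>/2)" using elim k1 by (intro mult_left_mono) auto
      then have "real k * ga k \<le> real k * al k - ln 4" using kk by (simp add: algebra_simps)
      then have "exp (real k * ga k) \<le> exp (real k * al k - ln 4)" by simp
      then show ?thesis by (simp add: exp_diff)
    qed
    define pA where "pA = measure M {\<omega>\<in>space M. t - \<delta> < X k \<omega> \<and> X k \<omega> < t + \<delta>}"
    define pG where "pG = measure M {\<omega>\<in>space M. X k \<omega> \<in> G}"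
    have hA: "exp (real k * al k) / 2 \<le> exp (real k * (th * t + \<bar>th\<bar> * \<delta>)) * pA"
      using main[OF k1] q1 q2 unfolding pA_def by linarith
    have pA_ge: "pA \<ge> exp (real k * (al k - th * t - \<bar>th\<bar> * \<delta>)) / 2"
    proof -
      have "exp (real k * (al k - th * t - \<bar>th\<bar> * \<delta>)) / 2 = (exp (real k * al k) / 2) / exp (real k * (th * t + \<bar>th\<bar> * \<delta>))"
        by (simp add: exp_diff[symmetric] algebra_simps)
      also have "\<dots> \<le> pA" using hA by (simp add: divide_le_eq mult.commute)
      finally show ?thesis .
    qed
    have sub: "{\<omega>\<in>space M. t - \<delta> < X k \<omega> \<and> X k \<omega> < t + \<delta>} \<subseteq> {\<omega>\<in>space M. X k \<omega> \<in> G}"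
    proof
      fix \<omega> assume "\<omega> \<in> {\<omega>\<in>space M. t - \<delta> < X k \<omega> \<and> X k \<omega> < t + \<delta>}"
      then have "X k \<omega> \<in> ball t \<delta>0" "\<omega> \<in> space M" using dle by (auto simp: dist_real_def abs_less_iff)
      then show "\<omega> \<in> {\<omega>\<in>space M. X k \<omega> \<in> G}" using d0 by auto
    qed
    have Gm: "G \<in> sets borel" using assms by simp
    have "{\<omega>\<in>space M. X k \<omega> \<in> G} \<in> sets M" using Xm[of k] Gm by measurable
    then have pAG: "pA \<le> pG" unfolding pA_def pG_def using sub by (intro finite_measure_mono) auto
    have pApos: "pA > 0"
    proof -
      have "0 < exp (real k * (al k - th * t - \<bar>th\<bar> * \<delta>)) / 2" by simp
      then show ?thesis using pA_ge by linarith
    qed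
    have "ln (exp (real k * (al k - th * t - \<bar>th\<bar> * \<delta>)) / 2) \<le> ln pG"
      using pA_ge pAG pApos by (subst ln_le_cancel_iff) auto
    then have "real k * (al k - th * t - \<bar>th\<bar> * \<delta>) - ln 2 \<le> ln pG" by (simp add: ln_div)
    then have "(real k * (al k - th * t - \<bar>th\<bar> * \<delta>) - ln 2) / real k \<le> ln pG / real k"
      using k1 by (intro divide_right_mono) auto
    moreover have "(real k * (al k - th * t - \<bar>th\<bar> * \<delta>) - ln 2) / real k = al k - th * t - \<bar>th\<bar> * \<delta> - ln 2 / real k"
      using k1 by (simp add: field_simps)
    ultimately have "al k - th * t - \<bar>th\<bar> * \<delta> - ln 2 / real k \<le> ln pG / real k" by simp
    moreover have "pG \<noteq> 0" using pApos pAG by simp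
    ultimately show ?case by (simp add: log_prob_rate_def measure_distr_X[OF Gm] pG_def)
  qed
  have lim: "(\<lambda>k. al k - th * t - \<bar>th\<bar> * \<delta> - ln 2 / real k) \<longlonglongrightarrow> (th * m + th^2 * \<sigma>2 / 2) - th * t - \<bar>th\<bar> * \<delta> - 0"
    by (intro tendsto_intros al_lim tendsto_divide_0[OF tendsto_const] filterlim_real_sequentially)
  have "(th * m + th^2 * \<sigma>2 / 2) - th * t = - I t"
    using \<sigma>pos by (simp add: th_def Irate_def field_simps power2_eq_square)
  then have "- I t - \<epsilon> \<le> (th * m + th^2 * \<sigma>2 / 2) - th * t - \<bar>th\<bar> * \<delta> - 0" using the by simp
  then have "ereal (- I t - \<epsilon>) \<le> ereal ((th * m + th^2 * \<sigma>2 / 2) - th * t - \<bar>th\<bar> * \<delta> - 0)" by simp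
  also have "\<dots> \<le> liminf (\<lambda>k. log_prob_rate (distr M borel (X k)) k G)"
    by (rule liminf_ge_lim[OF ev lim])
  finally show ?thesis .
qed

lemma lower_bound:
  assumes "open G"
  shows "- (INF t\<in>G. ereal (I t)) \<le> liminf (\<lambda>k. log_prob_rate (distr M borel (X k)) k G)"
proof -
  let ?y = "liminf (\<lambda>k. log_prob_rate (distr M borel (X k)) k G)"
  have pt: "- ereal (I t) \<le> ?y" if "t \<in> G" for t
  proof (rule dense_le)
    fix z assume z: "z < - ereal (I t)"
    show "z \<le> ?y"
    proof (cases z)
      case (real z')
      then have "z' < - I t" using z by simp
      then have "ereal (- I t - (- I t - z')) \<le> ?y" using lower_point[OF assms that, of "- I t - z'"] by simp
      then show ?thesis using real by simp
    qed (use z in auto)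
  qed
  have pt2: "- ?y \<le> ereal (I t)" if "t \<in> G" for t
    using pt[OF that] ereal_uminus_le_reorder by blast
  have "- ?y \<le> (INF t\<in>G. ereal (I t))"
    using pt2 by (intro INF_greatest) auto
  then show ?thesis using ereal_uminus_le_reorder by blast
qed

lemma LDP: "satisfies_LDP (\<lambda>k. distr M borel (X k)) I"
  unfolding satisfies_LDP_def using upper_bound lower_bound by blast

lemma good: "good_rate_function I"
  unfolding good_rate_function_def
proof
  fix c
  have "{t. I t \<le> c} = {t. (t - m)^2 \<le> 2 * \<sigma>2 * c}" using \<sigma>pos by (auto simp: Irate_def field_simps)
  also have "\<dots> \<subseteq> cball m (sqrt (2 * \<sigma>2 * c))"
  proof
    fix t assume "t \<in> {t. (t - m)^2 \<le> 2 * \<sigma>2 * c}"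
    then have "sqrt ((t-m)^2) \<le> sqrt (2 * \<sigma>2 * c)" using real_sqrt_le_mono by blast
    then show "t \<in> cball m (sqrt (2 * \<sigma>2 * c))" by (simp add: dist_real_def abs_minus_commute)
  qed
  finally have bnd: "bounded {t. I t \<le> c}" by (rule bounded_subset[OF bounded_cball])
  have "closed {t. I t \<le> c}" unfolding Irate_def using \<sigma>pos by (intro closed_Collect_le continuous_intros) auto
  then show "compact {t. I t \<le> c}" using bnd by (simp add: compact_eq_bounded_closed)
qed

end




lemma pd_inv:
  fixes S :: "real^'n^'n"
  assumes "pos_def_mat S"
  shows "S ** matrix_inv S = mat 1" "matrix_inv S ** S = mat 1"
proof -
  have ker: "\<forall>x. S *v x = 0 \<longrightarrow> x = 0"
  proof (intro allI impI)
    fix x assume Sx: "S *v x = 0"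
    show "x = 0"
    proof (rule ccontr)
      assume "x \<noteq> 0"
      then have "0 < x \<bullet> (S *v x)" using assms by (simp add: pos_def_mat_def)
      with Sx show False by simp
    qed
  qed
  then obtain B where B: "B ** S = mat 1" using matrix_left_invertible_ker by blast
  then have "S ** B = mat 1" using matrix_left_right_inverse by blast
  with B have "\<exists>A'. S ** A' = mat 1 \<and> A' ** S = mat 1" by blast
  then have "S ** matrix_inv S = mat 1 \<and> matrix_inv S ** S = mat 1"
    unfolding matrix_inv_def by (rule someI_ex)
  then show "S ** matrix_inv S = mat 1" "matrix_inv S ** S = mat 1" by auto
qed

lemma sym_dot:
  fixes S :: "real^'n^'n"
  assumes "transpose S = S"
  shows "u \<bullet> (S *v w) = (S *v u) \<bullet> w"
  by (metis assms dot_lmul_matrix vector_transpose_matrix)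

lemma inv_apply:
  fixes S :: "real^'n^'n"
  assumes "pos_def_mat S"
  shows "matrix_inv S *v (S *v u) = u" "S *v (matrix_inv S *v u) = u"
  using pd_inv[OF assms] by (simp_all add: matrix_vector_mul_assoc)

lemma complete_square:
  fixes S :: "real^'n^'n"
  assumes pd: "pos_def_mat S"
  shows "exp (u \<bullet> x) * gauss_density S x = exp (u \<bullet> (S *v u) / 2) * gauss_density S (x - S *v u)"
proof -
  let ?A = "matrix_inv S"
  have symS: "transpose S = S" using pd by (simp add: pos_def_mat_def)
  have e1: "?A *v (x - S *v u) = ?A *v x - u"
    using inv_apply[OF pd] by (simp add: matrix_vector_mult_diff_distrib)
  have e2: "(S *v u) \<bullet> (?A *v x) = u \<bullet> x"
    using sym_dot[OF symS, of u "?A *v x"] inv_apply[OF pd] by simp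
  have "(x - S *v u) \<bullet> (?A *v (x - S *v u)) = x \<bullet> (?A *v x) - 2 * (u \<bullet> x) + u \<bullet> (S *v u)"
    unfolding e1 using e2 by (simp add: inner_diff_left inner_diff_right inner_commute)
  then have "u \<bullet> x + - (x \<bullet> (?A *v x)) / 2 = u \<bullet> (S *v u) / 2 + - ((x - S *v u) \<bullet> (?A *v (x - S *v u))) / 2"
    by (simp add: field_simps)
  then have h2: "exp (u \<bullet> x) * exp (- (x \<bullet> (?A *v x)) / 2) = exp (u \<bullet> (S *v u) / 2) * exp (- ((x - S *v u) \<bullet> (?A *v (x - S *v u))) / 2)"
    unfolding mult_exp_exp by simp
  then show ?thesis
    unfolding gauss_density_def by (metis times_divide_eq_right)
qed

lemma nn_integral_translate:
  fixes c :: "'a::euclidean_space"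
  assumes "f \<in> borel_measurable borel"
  shows "(\<integral>\<^sup>+x. f (c + x) \<partial>lborel) = (\<integral>\<^sup>+x. f x \<partial>lborel)"
proof -
  have "(\<integral>\<^sup>+x. f x \<partial>lborel) = (\<integral>\<^sup>+x. f x \<partial>distr lborel borel ((+) c))"
    by (simp add: lborel_distr_plus)
  also have "\<dots> = (\<integral>\<^sup>+x. f (c + x) \<partial>lborel)"
    using assms by (subst nn_integral_distr) auto
  finally show ?thesis ..
qed

lemma gauss_density_measurable: "gauss_density S \<in> borel_measurable borel"
  unfolding gauss_density_def
  by (intro borel_measurable_divide borel_measurable_continuous_onI continuous_intros linear_continuous_on matrix_vector_mul_linear borel_measurable_const) auto

lemma gauss_mgf:
  fixes S :: "real^'n^'n" and Z :: "'w \<Rightarrow> real^'n"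
  assumes P: "prob_space M" and pd: "pos_def_mat S"
    and D: "distributed M lborel Z (\<lambda>x. ennreal (gauss_density S x))"
  shows "integrable M (\<lambda>\<omega>. exp (u \<bullet> Z \<omega>))" "(\<integral>\<omega>. exp (u \<bullet> Z \<omega>) \<partial>M) = exp (u \<bullet> (S *v u) / 2)"
proof -
  interpret prob_space M by (rule P)
  have Zm: "Z \<in> borel_measurable M"
    using distributed_measurable[OF D] by (simp add: measurable_lborel2)
  have gm: "gauss_density S \<in> borel_measurable borel" by (rule gauss_density_measurable)
  have one: "(\<integral>\<^sup>+x. ennreal (gauss_density S x) \<partial>lborel) = 1"
  proof -
    have "(\<integral>\<^sup>+x. ennreal (gauss_density S x) * 1 \<partial>lborel) = (\<integral>\<^sup>+x. 1 \<partial>M)"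
      by (rule distributed_nn_integral[OF D]) simp
    also have "\<dots> = 1" by (simp add: emeasure_space_1)
    finally show ?thesis by simp
  qed
  have gpos: "gauss_density S x > 0" for x
  proof (cases "sqrt ((2 * pi) ^ CARD('n) * det S) > 0")
    case True then show ?thesis by (simp add: gauss_density_def)
  next
    case False
    then have "\<And>x. gauss_density S x \<le> 0" unfolding gauss_density_def
      by (simp add: divide_nonneg_nonpos)
    then have "\<And>x. ennreal (gauss_density S x) = 0" by (simp add: ennreal_eq_0_iff)
    then have "(\<integral>\<^sup>+x. ennreal (gauss_density S x) \<partial>lborel) = 0" by simp
    with one show ?thesis by simp
  qed
  have um: "(\<lambda>x::real^'n. ennreal (exp (u \<bullet> x))) \<in> borel_measurable lborel" by measurable
  have nn: "(\<integral>\<^sup>+\<omega>. ennreal (exp (u \<bullet> Z \<omega>)) \<partial>M) = ennreal (exp (u \<bullet> (S *v u) / 2))"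
  proof -
    have "(\<integral>\<^sup>+\<omega>. ennreal (exp (u \<bullet> Z \<omega>)) \<partial>M) = (\<integral>\<^sup>+x. ennreal (gauss_density S x) * ennreal (exp (u \<bullet> x)) \<partial>lborel)"
      by (rule distributed_nn_integral[OF D um, symmetric])
    also have "\<dots> = (\<integral>\<^sup>+x. ennreal (exp (u \<bullet> (S *v u) / 2)) * ennreal (gauss_density S (- (S *v u) + x)) \<partial>lborel)"
    proof (rule nn_integral_cong)
      fix x
      have "ennreal (gauss_density S x) * ennreal (exp (u \<bullet> x)) = ennreal (exp (u \<bullet> x) * gauss_density S x)"
        using gpos[of x] by (simp add: ennreal_mult'' mult.commute)
      also have "\<dots> = ennreal (exp (u \<bullet> (S *v u) / 2) * gauss_density S (- (S *v u) + x))"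
        using complete_square[OF pd, of u x] by simp
      also have "\<dots> = ennreal (exp (u \<bullet> (S *v u) / 2)) * ennreal (gauss_density S (- (S *v u) + x))"
        using gpos[of "- (S *v u) + x"] by (intro ennreal_mult) auto
      finally show "ennreal (gauss_density S x) * ennreal (exp (u \<bullet> x)) = ennreal (exp (u \<bullet> (S *v u) / 2)) * ennreal (gauss_density S (- (S *v u) + x))" .
    qed
    also have "\<dots> = ennreal (exp (u \<bullet> (S *v u) / 2)) * (\<integral>\<^sup>+x. ennreal (gauss_density S (- (S *v u) + x)) \<partial>lborel)"
    proof -
      have gm2: "(\<lambda>x. gauss_density S (- (S *v u) + x)) \<in> borel_measurable borel"
        by (rule measurable_compose[OF _ gm]) simp
      then show ?thesis by (intro nn_integral_cmult) measurable
    qed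
    also have "(\<integral>\<^sup>+x. ennreal (gauss_density S (- (S *v u) + x)) \<partial>lborel) = 1"
      using nn_integral_translate[of "\<lambda>x. ennreal (gauss_density S x)" "- (S *v u)"] gm one by simp
    finally show ?thesis by simp
  qed
  have em: "(\<lambda>\<omega>. exp (u \<bullet> Z \<omega>)) \<in> borel_measurable M" using Zm by measurable
  show int: "integrable M (\<lambda>\<omega>. exp (u \<bullet> Z \<omega>))"
    using em nn by (intro integrableI_nn_integral_finite[where x="exp (u \<bullet> (S *v u) / 2)"]) auto
  have "(\<integral>\<omega>. exp (u \<bullet> Z \<omega>) \<partial>M) = enn2real (\<integral>\<^sup>+\<omega>. ennreal (exp (u \<bullet> Z \<omega>)) \<partial>M)"
    using em by (intro integral_eq_nn_integral) auto
  then show "(\<integral>\<omega>. exp (u \<bullet> Z \<omega>) \<partial>M) = exp (u \<bullet> (S *v u) / 2)" using nn by simp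
qed




definition Qf :: "real^'n^'n \<Rightarrow> real^'n \<Rightarrow> real" where
  "Qf A y = (\<Sum>a\<in>UNIV. \<Sum>b\<in>UNIV. A$a$b * (y$a - y$b)^2) / 2"

definition good :: "real \<Rightarrow> real^'n^'n \<Rightarrow> bool" where
  "good w A \<longleftrightarrow> transpose A = A \<and> (\<forall>a b. 0 \<le> A$a$b) \<and> (\<forall>a. (\<Sum>b\<in>UNIV. A$a$b) = 1)
     \<and> (\<forall>a. w \<le> A$a$a) \<and> (\<forall>a b. a \<noteq> b \<longrightarrow> 0 < A$a$b \<longrightarrow> w \<le> A$a$b)"

lemma sym_entry: "transpose A = A \<Longrightarrow> A$a$b = A$b$a"
  by (metis transpose_def vec_lambda_beta)

lemma norm2_sum: "(norm (y::real^'n))^2 = (\<Sum>a\<in>UNIV. (y$a)^2)"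
  by (simp add: norm_vec_def L2_set_def sum_nonneg)

lemma Q_identity:
  fixes A :: "real^'n^'n"
  assumes sym: "transpose A = A" and rs: "\<And>a. (\<Sum>b\<in>UNIV. A$a$b) = 1"
  shows "Qf A y = (norm y)^2 - y \<bullet> (A *v y)"
proof -
  have cs: "(\<Sum>a\<in>UNIV. A$a$b) = 1" for b
    using rs[of b] sym_entry[OF sym] by simp
  have t1: "(\<Sum>a\<in>UNIV. \<Sum>b\<in>UNIV. A$a$b * (y$a)^2) = (\<Sum>a\<in>UNIV. (y$a)^2)"
    by (simp add: sum_distrib_right[symmetric] rs)
  have t3: "(\<Sum>a\<in>UNIV. \<Sum>b\<in>UNIV. A$a$b * (y$b)^2) = (\<Sum>b\<in>UNIV. (y$b)^2)"
    by (subst sum.swap) (simp add: sum_distrib_right[symmetric] cs)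
  have t2: "(\<Sum>a\<in>UNIV. \<Sum>b\<in>UNIV. A$a$b * (y$a * y$b)) = y \<bullet> (A *v y)"
    by (simp add: inner_vec_def matrix_vector_mult_def sum_distrib_left algebra_simps)
  have "(\<Sum>a\<in>UNIV. \<Sum>b\<in>UNIV. A$a$b * (y$a - y$b)^2)
     = (\<Sum>a\<in>UNIV. \<Sum>b\<in>UNIV. A$a$b * (y$a)^2) - 2 * (\<Sum>a\<in>UNIV. \<Sum>b\<in>UNIV. A$a$b * (y$a * y$b)) + (\<Sum>a\<in>UNIV. \<Sum>b\<in>UNIV. A$a$b * (y$b)^2)"
    by (simp add: power2_diff algebra_simps sum.distrib sum_subtractf sum_distrib_left)
  then show ?thesis unfolding Qf_def using t1 t2 t3 by (simp add: norm2_sum)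
qed

lemma Qf_nonneg: "(\<forall>a b. 0 \<le> A$a$b) \<Longrightarrow> 0 \<le> Qf A y"
  unfolding Qf_def by (intro divide_nonneg_pos sum_nonneg mult_nonneg_nonneg) auto

lemma good_contract:
  fixes A :: "real^'n^'n"
  assumes g: "good w A"
  shows "(norm (A *v y))^2 \<le> (norm y)^2 - w * Qf A y"
proof -
  have sym: "transpose A = A" and nn: "\<And>a b. 0 \<le> A$a$b" and rs: "\<And>a. (\<Sum>b\<in>UNIV. A$a$b) = 1"
    and dg: "\<And>a. w \<le> A$a$a" using g by (auto simp: good_def)
  let ?C = "A ** A"
  have symC: "transpose ?C = ?C" using sym by (simp add: matrix_transpose_mul)
  have rsC: "(\<Sum>b\<in>UNIV. ?C$a$b) = 1" for a
  proof -
    have "(\<Sum>b\<in>UNIV. ?C$a$b) = (\<Sum>c\<in>UNIV. A$a$c * (\<Sum>b\<in>UNIV. A$c$b))"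
      by (simp add: matrix_matrix_mult_def sum_distrib_left) (rule sum.swap)
    also have "\<dots> = 1" using rs by simp
    finally show ?thesis .
  qed
  have "(norm (A *v y))^2 = (A *v y) \<bullet> (A *v y)" by (simp add: power2_norm_eq_inner)
  also have "\<dots> = y \<bullet> (A *v (A *v y))" using sym_dot[OF sym, of y "A *v y"] by simp
  also have "\<dots> = y \<bullet> (?C *v y)" by (simp add: matrix_vector_mul_assoc)
  also have "\<dots> = (norm y)^2 - Qf ?C y" using Q_identity[OF symC rsC] by simp
  finally have e: "(norm (A *v y))^2 = (norm y)^2 - Qf ?C y" .
  have "w * Qf A y \<le> Qf ?C y"
  proof -
    have le: "w * A$a$b \<le> ?C$a$b" for a b
    proof -
      have "w * A$a$b \<le> A$a$a * A$a$b" using dg[of a] nn[of a b] by (simp add: mult_right_mono)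
      also have "\<dots> \<le> (\<Sum>c\<in>UNIV. A$a$c * A$c$b)"
        using nn by (intro member_le_sum[where f="\<lambda>c. A$a$c * A$c$b"]) auto
      finally show ?thesis by (simp add: matrix_matrix_mult_def)
    qed
    have "w * Qf A y = (\<Sum>a\<in>UNIV. \<Sum>b\<in>UNIV. (w * A$a$b) * (y$a - y$b)^2) / 2"
      by (simp add: Qf_def sum_distrib_left mult.assoc)
    also have "\<dots> \<le> (\<Sum>a\<in>UNIV. \<Sum>b\<in>UNIV. ?C$a$b * (y$a - y$b)^2) / 2"
      using le by (intro divide_right_mono sum_mono mult_right_mono) auto
    finally show ?thesis by (simp add: Qf_def)
  qed
  then show ?thesis using e by simp
qed

lemma good_step:
  fixes A :: "real^'n^'n"
  assumes g: "good w A"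
  shows "(norm (A *v y - y))^2 \<le> 2 * Qf A y"
proof -
  have nn: "\<And>a b. 0 \<le> A$a$b" and rs: "\<And>a. (\<Sum>b\<in>UNIV. A$a$b) = 1"
    using g by (auto simp: good_def)
  have row: "((A *v y - y)$a)^2 \<le> (\<Sum>b\<in>UNIV. A$a$b * (y$a - y$b)^2)" for a
  proof -
    have "(A *v y - y)$a = (\<Sum>b\<in>UNIV. A$a$b * (y$b - y$a))"
      using rs[of a] by (simp add: matrix_vector_mult_def right_diff_distrib sum_subtractf sum_distrib_right[symmetric])
    also have "\<dots> = (\<Sum>b\<in>UNIV. sqrt (A$a$b) * (sqrt (A$a$b) * (y$b - y$a)))"
      using nn by (intro sum.cong) (auto simp: mult.assoc[symmetric])
    finally have "((A *v y - y)$a)^2 \<le> (\<Sum>b\<in>UNIV. (sqrt (A$a$b))^2) * (\<Sum>b\<in>UNIV. (sqrt (A$a$b) * (y$b - y$a))^2)"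
      using Cauchy_Schwarz_ineq_sum by metis
    also have "\<dots> = (\<Sum>b\<in>UNIV. A$a$b * (y$a - y$b)^2)"
      using nn rs[of a] by (simp add: power_mult_distrib power2_commute)
    finally show ?thesis .
  qed
  have "(norm (A *v y - y))^2 = (\<Sum>a\<in>UNIV. ((A *v y - y)$a)^2)" by (rule norm2_sum)
  also have "\<dots> \<le> (\<Sum>a\<in>UNIV. \<Sum>b\<in>UNIV. A$a$b * (y$a - y$b)^2)" by (intro sum_mono row)
  also have "\<dots> = 2 * Qf A y" by (simp add: Qf_def)
  finally show ?thesis .
qed

lemma good_edge:
  fixes A :: "real^'n^'n"
  assumes g: "good w A" and ab: "a \<noteq> b" "0 < A$a$b"
  shows "w * (y$a - y$b)^2 \<le> 2 * Qf A y"
proof -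
  have nn: "\<And>a b. 0 \<le> A$a$b" and off: "w \<le> A$a$b"
    using g ab by (auto simp: good_def)
  have "w * (y$a - y$b)^2 \<le> A$a$b * (y$a - y$b)^2" using off by (simp add: mult_right_mono)
  also have "\<dots> \<le> (\<Sum>b'\<in>UNIV. A$a$b' * (y$a - y$b')^2)"
    using nn by (intro member_le_sum[where f="\<lambda>b'. A$a$b' * (y$a - y$b')^2"]) auto
  also have "\<dots> \<le> (\<Sum>a'\<in>UNIV. \<Sum>b'\<in>UNIV. A$a'$b' * (y$a' - y$b')^2)"
    using nn by (intro member_le_sum[where f="\<lambda>a'. \<Sum>b'\<in>UNIV. A$a'$b' * (y$a' - y$b')^2"] sum_nonneg) auto
  also have "\<dots> = 2 * Qf A y" by (simp add: Qf_def)
  finally show ?thesis .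
qed

definition cst :: "real \<Rightarrow> nat \<Rightarrow> real \<Rightarrow> real" where
  "cst w B N = 2 * real B * N^5 * (1 / sqrt w + 2)^2 / w + 2"

lemma window:
  fixes A :: "nat \<Rightarrow> real^'n^'n" and y :: "nat \<Rightarrow> real^'n"
  assumes g: "\<And>t. t < B \<Longrightarrow> good w (A t)" and w: "0 < w"
    and step: "\<And>t. t < B \<Longrightarrow> y (Suc t) = A t *v y t"
    and sum0: "(\<Sum>a\<in>UNIV. y 0 $ a) = 0"
    and conn: "\<And>a b. (a,b) \<in> {(a,b). a \<noteq> b \<and> (\<exists>t<B. 0 < A t $ a $ b)}\<^sup>*"
  shows "(norm (y B))^2 \<le> (1 - 1 / cst w B (real CARD('n))) * (norm (y 0))^2"
proof -
  define N where "N = real CARD('n)"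
  define Qt where "Qt t = Qf (A t) (y t)" for t
  have Qt0: "0 \<le> Qt t" if "t < B" for t
    using g[OF that] unfolding Qt_def good_def by (intro Qf_nonneg) auto
  have s1: "n \<le> B \<Longrightarrow> (norm (y n))^2 \<le> (norm (y 0))^2 - w * (\<Sum>t<n. Qt t)" for n
  proof (induction n)
    case 0 then show ?case by simp
  next
    case (Suc n)
    have "(norm (y (Suc n)))^2 \<le> (norm (y n))^2 - w * Qt n"
      using good_contract[OF g, of n "y n"] step[of n] Suc.prems by (simp add: Qt_def)
    with Suc show ?case by (simp add: algebra_simps)
  qed
  define SQ where "SQ = (\<Sum>t<B. Qt t)"
  define \<Delta> where "\<Delta> = (norm (y 0))^2 - (norm (y B))^2"
  have SQ0: "0 \<le> SQ" unfolding SQ_def using Qt0 by (intro sum_nonneg) auto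
  have dSQ: "w * SQ \<le> \<Delta>" using s1[of B] by (simp add: \<Delta>_def SQ_def)
  define R where "R = (\<Sum>t<B. sqrt (2 * Qt t))"
  have R0: "0 \<le> R" unfolding R_def using Qt0 by (intro sum_nonneg) auto
  have sqR: "sqrt (2 * Qt t) \<le> R" if "t < B" for t
    unfolding R_def using that Qt0 by (intro member_le_sum[where f="\<lambda>t. sqrt (2 * Qt t)"]) auto
  have s2: "n \<le> B \<Longrightarrow> norm (y n - y 0) \<le> (\<Sum>t<n. sqrt (2 * Qt t))" for n
  proof (induction n)
    case 0 then show ?case by simp
  next
    case (Suc n)
    have "norm (y (Suc n) - y n) \<le> sqrt (2 * Qt n)"
    proof -
      have "(norm (y (Suc n) - y n))^2 \<le> 2 * Qt n"
        using good_step[OF g, of n "y n"] step[of n] Suc.prems by (simp add: Qt_def)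
      then show ?thesis by (simp add: real_le_rsqrt)
    qed
    moreover have "norm (y (Suc n) - y 0) \<le> norm (y (Suc n) - y n) + norm (y n - y 0)"
      by (rule order_trans[OF _ norm_triangle_ineq]) simp
    ultimately show ?case using Suc by simp
  qed
  have s2': "norm (y n - y 0) \<le> R" if "n \<le> B" for n
  proof -
    have "(\<Sum>t<n. sqrt (2 * Qt t)) \<le> R" unfolding R_def using that Qt0
      by (intro sum_mono2) auto
    then show ?thesis using s2[OF that] by simp
  qed
  have s3: "R^2 \<le> 2 * real B * SQ"
  proof -
    have "R^2 = (\<Sum>t<B. 1 * sqrt (2 * Qt t))^2" by (simp add: R_def)
    also have "\<dots> \<le> (\<Sum>t<B. 1^2) * (\<Sum>t<B. (sqrt (2 * Qt t))^2)" by (rule Cauchy_Schwarz_ineq_sum)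
    also have "(\<Sum>t<B. (sqrt (2 * Qt t))^2) = (\<Sum>t<B. 2 * Qt t)"
      using Qt0 by (intro sum.cong) auto
    finally show ?thesis by (simp add: SQ_def sum_distrib_left mult.assoc mult.left_commute)
  qed
  define K where "K = 1 / sqrt w + 2"
  have K0: "0 \<le> K" using w by (simp add: K_def)
  have s4: "\<bar>y 0 $ a - y 0 $ b\<bar> \<le> K * R" if t: "t < B" and ab: "a \<noteq> b" "0 < A t $ a $ b" for t a b
  proof -
    have "w * (y t $ a - y t $ b)^2 \<le> 2 * Qt t" using good_edge[OF g[OF t] ab] by (simp add: Qt_def)
    then have "(y t $ a - y t $ b)^2 \<le> 2 * Qt t / w" using w by (simp add: field_simps)
    then have "\<bar>y t $ a - y t $ b\<bar> \<le> sqrt (2 * Qt t / w)" by (simp add: real_le_rsqrt)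
    also have "\<dots> = sqrt (2 * Qt t) / sqrt w" by (simp add: real_sqrt_divide)
    also have "\<dots> \<le> R / sqrt w" using sqR[OF t] w by (simp add: divide_right_mono)
    finally have h1: "\<bar>y t $ a - y t $ b\<bar> \<le> R / sqrt w" .
    have h2: "\<bar>(y t - y 0) $ a\<bar> \<le> R" "\<bar>(y t - y 0) $ b\<bar> \<le> R"
      using s2'[of t] t component_le_norm_cart[of "y t - y 0"] by (meson less_imp_le order_trans)+
    have "\<bar>y 0 $ a - y 0 $ b\<bar> \<le> \<bar>y t $ a - y t $ b\<bar> + \<bar>(y t - y 0) $ a\<bar> + \<bar>(y t - y 0) $ b\<bar>"
      by simp
    also have "\<dots> \<le> R / sqrt w + R + R" using h1 h2 by simp
    also have "\<dots> = K * R" by (simp add: K_def field_simps)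
    finally show ?thesis .
  qed
  define E where "E = {(a::'n,b). a \<noteq> b \<and> (\<exists>t<B. 0 < A t $ a $ b)}"
  have s5: "(a, b) \<in> E ^^ n \<Longrightarrow> \<bar>y 0 $ a - y 0 $ b\<bar> \<le> real n * (K * R)" for a b n
  proof (induction n arbitrary: b)
    case 0 then show ?case by simp
  next
    case (Suc n)
    then obtain c where c: "(a, c) \<in> E ^^ n" "(c, b) \<in> E" by auto
    have "\<bar>y 0 $ c - y 0 $ b\<bar> \<le> K * R" using c(2) s4 unfolding E_def by blast
    moreover have "\<bar>y 0 $ a - y 0 $ c\<bar> \<le> real n * (K * R)" using Suc.IH c(1) by blast
    ultimately show ?case by (simp add: algebra_simps)
  qed
  have finE: "finite E" by simp
  have cardE: "card E \<le> CARD('n) * CARD('n)"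
  proof -
    have "card E \<le> card (UNIV :: ('n \<times> 'n) set)" by (intro card_mono) auto
    then show ?thesis by (simp add: UNIV_Times_UNIV[symmetric] card_cartesian_product del: UNIV_Times_UNIV)
  qed
  have s5': "\<bar>y 0 $ a - y 0 $ b\<bar> \<le> N^2 * (K * R)" for a b
  proof -
    have "(a, b) \<in> E\<^sup>*" using conn unfolding E_def by blast
    then obtain n where n: "n \<le> card E" "(a, b) \<in> E ^^ n"
      using rtrancl_finite_eq_relpow[OF finE] by auto
    have "real n \<le> N^2" using n(1) cardE unfolding N_def
      by (simp add: power2_eq_square) (metis of_nat_le_iff of_nat_mult order_trans)
    then have "real n * (K * R) \<le> N^2 * (K * R)" using K0 R0 by (intro mult_right_mono) auto
    then show ?thesis using s5[OF n(2)] by simp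
  qed
  have Npos: "N > 0" by (simp add: N_def)
  have s6: "\<bar>y 0 $ a\<bar> \<le> N^2 * (K * R)" for a
  proof -
    have "N * y 0 $ a = (\<Sum>b\<in>UNIV. y 0 $ a - y 0 $ b)"
      using sum0 by (simp add: sum_subtractf N_def)
    then have "N * \<bar>y 0 $ a\<bar> \<le> (\<Sum>b\<in>UNIV. \<bar>y 0 $ a - y 0 $ b\<bar>)"
      using Npos by (metis abs_mult abs_of_pos sum_abs)
    also have "\<dots> \<le> (\<Sum>b\<in>(UNIV::'n set). N^2 * (K * R))" by (rule sum_mono) (rule s5')
    also have "\<dots> = N * (N^2 * (K * R))" by (simp add: N_def)
    finally show ?thesis using Npos by simp
  qed
  have s7: "(norm (y 0))^2 \<le> N^5 * K^2 * (2 * real B * SQ)"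
  proof -
    have "(norm (y 0))^2 = (\<Sum>a\<in>UNIV. (y 0 $ a)^2)" by (rule norm2_sum)
    also have "\<dots> \<le> (\<Sum>a\<in>(UNIV::'n set). (N^2 * (K * R))^2)"
    proof (rule sum_mono)
      fix a
      have "0 \<le> N^2 * (K * R)" using K0 R0 by simp
      then show "(y 0 $ a)^2 \<le> (N^2 * (K * R))^2"
        using s6[of a] by (metis abs_le_square_iff abs_of_nonneg)
    qed
    also have "\<dots> = N^5 * K^2 * R^2" by (simp add: N_def power_mult_distrib power2_eq_square numeral_eq_Suc)
    also have "\<dots> \<le> N^5 * K^2 * (2 * real B * SQ)" using s3 Npos by (intro mult_left_mono) auto
    finally show ?thesis .
  qed
  define C where "C = cst w B N"
  have Cdef: "C = 2 * real B * N^5 * K^2 / w + 2" by (simp add: C_def cst_def K_def)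
  have Cpos: "C \<ge> 2" unfolding Cdef using w Npos by simp
  have y0C: "(norm (y 0))^2 \<le> C * \<Delta>"
  proof -
    have "(norm (y 0))^2 \<le> N^5 * K^2 * 2 * real B * SQ" using s7 by (simp add: mult.assoc)
    also have "\<dots> \<le> N^5 * K^2 * 2 * real B * (\<Delta> / w)"
      using dSQ w Npos by (intro mult_left_mono) (auto simp: field_simps)
    also have "\<dots> \<le> C * \<Delta>"
    proof -
      have D0: "0 \<le> \<Delta>" using dSQ SQ0 w by (smt (verit) mult_nonneg_nonneg)
      have "N^5 * K^2 * 2 * real B * (\<Delta> / w) = (2 * real B * N^5 * K^2 / w) * \<Delta>" by (simp add: field_simps)
      also have "\<dots> \<le> C * \<Delta>" using D0 unfolding Cdef by (intro mult_right_mono) auto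
      finally show ?thesis .
    qed
    finally show ?thesis .
  qed
  have "(norm (y B))^2 = (norm (y 0))^2 - \<Delta>" by (simp add: \<Delta>_def)
  also have "\<dots> \<le> (norm (y 0))^2 - (norm (y 0))^2 / C" using y0C Cpos by (simp add: field_simps)
  also have "\<dots> = (1 - 1 / C) * (norm (y 0))^2" by (simp add: field_simps)
  finally show ?thesis by (simp add: C_def N_def)
qed




fun Pm :: "(nat \<Rightarrow> real^'n^'n) \<Rightarrow> nat \<Rightarrow> nat \<Rightarrow> real^'n^'n" where
  "Pm W j 0 = mat 1"
| "Pm W j (Suc n) = W (j + n) ** Pm W j n"

lemma Pm_Suc_left: "Pm W j (Suc n) = Pm W (Suc j) n ** W j"
proof (induction n arbitrary: j)
  case 0 then show ?case by simp
next
  case (Suc n)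
  have "Pm W j (Suc (Suc n)) = W (j + Suc n) ** (Pm W (Suc j) n ** W j)" using Suc by simp
  also have "\<dots> = (W (Suc j + n) ** Pm W (Suc j) n) ** W j" by (simp add: matrix_mul_assoc)
  finally show ?case by simp
qed

lemma mv_sum: "A *v (\<Sum>j\<in>J. f j) = (\<Sum>j\<in>J. A *v f j)" for A :: "real^'n^'n"
  by (rule linear_sum[OF matrix_vector_mul_linear])

lemma rcons_repr:
  fixes W :: "nat \<Rightarrow> real^'n^'n" and e :: "nat \<Rightarrow> real^'n"
  shows "k \<ge> 1 \<Longrightarrow> rcons W e k = (real CARD('n) / real k) *\<^sub>R (\<Sum>j\<in>{1..k}. Pm W j (k - j) *v e j)"
proof (induction k rule: nat_induct_at_least)
  case base then show ?case by simp
next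
  case (Suc k)
  then obtain k' where k': "k = Suc k'" by (cases k) auto
  let ?N = "real CARD('n)"
  have sum1: "W k *v (\<Sum>j\<in>{1..k}. Pm W j (k - j) *v e j) = (\<Sum>j\<in>{1..k}. Pm W j (Suc k - j) *v e j)"
    unfolding mv_sum
  proof (rule sum.cong)
    fix j assume j: "j \<in> {1..k}"
    then have "Suc k - j = Suc (k - j)" "j + (k - j) = k" by auto
    then show "W k *v (Pm W j (k - j) *v e j) = Pm W j (Suc k - j) *v e j"
      by (simp add: matrix_vector_mul_assoc)
  qed simp
  have "rcons W e (Suc k) = (real k / real (Suc k)) *\<^sub>R (W k *v rcons W e k) + (1 / real (Suc k)) *\<^sub>R (?N *\<^sub>R e (Suc k))"
    using k' by simp
  also have "\<dots> = (real k / real (Suc k)) *\<^sub>R (?N / real k) *\<^sub>R (\<Sum>j\<in>{1..k}. Pm W j (Suc k - j) *v e j) + (1 / real (Suc k)) *\<^sub>R (?N *\<^sub>R e (Suc k))"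
    using Suc.IH sum1 by (simp add: matrix_vector_mult_scaleR)
  also have "\<dots> = (?N / real (Suc k)) *\<^sub>R ((\<Sum>j\<in>{1..k}. Pm W j (Suc k - j) *v e j) + Pm W (Suc k) (Suc k - Suc k) *v e (Suc k))"
    using Suc.hyps by (simp add: scaleR_add_right)
  also have "(\<Sum>j\<in>{1..k}. Pm W j (Suc k - j) *v e j) + Pm W (Suc k) (Suc k - Suc k) *v e (Suc k) = (\<Sum>j\<in>{1..Suc k}. Pm W j (Suc k - j) *v e j)"
    by simp
  finally show ?case .
qed




lemma indep_mgf:
  fixes S :: "real^'n^'n" and \<zeta> :: "nat \<Rightarrow> 'w \<Rightarrow> real^'n"
  assumes P: "prob_space M" and pd: "pos_def_mat S"
    and indep: "prob_space.indep_vars M (\<lambda>_. borel) \<zeta> {1..}"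
    and gauss: "\<And>k. k \<ge> 1 \<Longrightarrow> distributed M lborel (\<zeta> k) (\<lambda>x. ennreal (gauss_density S x))"
    and J: "finite J" "J \<subseteq> {1..}"
  shows "integrable M (\<lambda>\<omega>. \<Prod>j\<in>J. exp (u j \<bullet> \<zeta> j \<omega>))"
    "(\<integral>\<omega>. (\<Prod>j\<in>J. exp (u j \<bullet> \<zeta> j \<omega>)) \<partial>M) = (\<Prod>j\<in>J. exp (u j \<bullet> (S *v u j) / 2))"
proof -
  interpret prob_space M by (rule P)
  have ind2: "indep_vars (\<lambda>_. borel) (\<lambda>j \<omega>. exp (u j \<bullet> \<zeta> j \<omega>)) J"
    using indep_vars_subset[OF indep J(2)]
    by (rule indep_vars_compose2[where Y="\<lambda>j z. exp (u j \<bullet> z)"]) measurable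
  have int: "integrable M (\<lambda>\<omega>. exp (u j \<bullet> \<zeta> j \<omega>))" if "j \<in> J" for j
    using gauss_mgf(1)[OF P pd gauss] that J by auto
  show "integrable M (\<lambda>\<omega>. \<Prod>j\<in>J. exp (u j \<bullet> \<zeta> j \<omega>))"
    by (rule indep_vars_integrable[OF J(1) ind2 int])
  have "(\<integral>\<omega>. (\<Prod>j\<in>J. exp (u j \<bullet> \<zeta> j \<omega>)) \<partial>M) = (\<Prod>j\<in>J. \<integral>\<omega>. exp (u j \<bullet> \<zeta> j \<omega>) \<partial>M)"
    by (rule indep_vars_lebesgue_integral[OF J(1) ind2 int])
  also have "\<dots> = (\<Prod>j\<in>J. exp (u j \<bullet> (S *v u j) / 2))"
    using gauss_mgf(2)[OF P pd gauss] J by (intro prod.cong) auto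
  finally show "(\<integral>\<omega>. (\<Prod>j\<in>J. exp (u j \<bullet> \<zeta> j \<omega>)) \<partial>M) = (\<Prod>j\<in>J. exp (u j \<bullet> (S *v u j) / 2))" .
qed

lemma eta_comp:
  fixes P :: "real^'n^'n"
  shows "(P *v eta_vec S m0 m1 (ml + z)) $ i =
     P $ i \<bullet> (\<chi> a. (matrix_inv S *v (m1 - m0)) $ a * (ml $ a - (m1 $ a + m0 $ a) / 2))
     + (\<chi> a. P $ i $ a * (matrix_inv S *v (m1 - m0)) $ a) \<bullet> z"
  unfolding matrix_vector_mult_def eta_vec_def inner_vec_def
  by (simp add: sum.distrib[symmetric] algebra_simps)

locale setting =
  fixes M :: "'w measure"
    and \<zeta> :: "nat \<Rightarrow> 'w \<Rightarrow> real^'n"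
    and S :: "real^'n^'n"
    and m0 m1 :: "real^'n"
    and W :: "nat \<Rightarrow> real^'n^'n"
    and Wmin :: real
    and B :: nat and l :: nat and i :: 'n
  assumes P: "prob_space M"
    and S_pd: "pos_def_mat S"
    and m_ne: "m0 \<noteq> m1"
    and indep: "prob_space.indep_vars M (\<lambda>_. borel) \<zeta> {1..}"
    and gauss: "\<And>k. k \<ge> 1 \<Longrightarrow> distributed M lborel (\<zeta> k) (\<lambda>x. ennreal (gauss_density S x))"
    and W_sym: "\<And>k. k \<ge> 1 \<Longrightarrow> transpose (W k) = W k"
    and W_nonneg: "\<And>k i j. k \<ge> 1 \<Longrightarrow> W k $ i $ j \<ge> 0"
    and W_stoch: "\<And>k i. k \<ge> 1 \<Longrightarrow> (\<Sum>j\<in>UNIV. W k $ i $ j) = 1"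
    and Wmin: "0 < Wmin" "Wmin < 1"
    and W_diag: "\<And>k i. k \<ge> 1 \<Longrightarrow> W k $ i $ i \<ge> Wmin"
    and W_off: "\<And>k i j. k \<ge> 1 \<Longrightarrow> i \<noteq> j \<Longrightarrow> W k $ i $ j > 0 \<Longrightarrow> W k $ i $ j \<ge> Wmin"
    and B_pos: "B \<ge> 1"
    and conn: "\<And>k i j. k \<ge> 1 \<Longrightarrow>
       (i, j) \<in> {(a, b). a \<noteq> b \<and> (\<exists>l\<in>{k+1..k+B}. W l $ a $ b > 0)}\<^sup>*"
    and l01: "l \<in> {0::nat, 1}"
begin

definition "vv = matrix_inv S *v (m1 - m0)"
definition "ml = (if l = 0 then m0 else m1)"
definition "bb = (\<chi> a. vv $ a * (ml $ a - (m1 $ a + m0 $ a) / 2))"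
definition "rr j n = Pm W j n $ i"
definition "aa k = real CARD('n) / real k * (\<Sum>j\<in>{1..k}. rr j (k - j) \<bullet> bb)"
definition "cc k j = (real CARD('n) / real k) *\<^sub>R (\<chi> a. rr j (k - j) $ a * vv $ a)"
definition "ss k = (\<Sum>j\<in>{1..k}. cc k j \<bullet> (S *v cc k j))"
definition "X k \<omega> = rcons W (\<lambda>j. eta_vec S m0 m1 (ml + \<zeta> j \<omega>)) k $ i"

lemma X_repr: "k \<ge> 1 \<Longrightarrow> X k \<omega> = aa k + (\<Sum>j\<in>{1..k}. cc k j \<bullet> \<zeta> j \<omega>)"
proof -
  assume k: "k \<ge> 1"
  have "X k \<omega> = real CARD('n) / real k * (\<Sum>j\<in>{1..k}. (Pm W j (k - j) *v eta_vec S m0 m1 (ml + \<zeta> j \<omega>)) $ i)"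
    unfolding X_def rcons_repr[OF k] by (simp add: sum_component)
  also have "\<dots> = real CARD('n) / real k * (\<Sum>j\<in>{1..k}. rr j (k - j) \<bullet> bb + (\<chi> a. rr j (k - j) $ a * vv $ a) \<bullet> \<zeta> j \<omega>)"
    unfolding eta_comp rr_def bb_def vv_def by simp
  also have "\<dots> = aa k + (\<Sum>j\<in>{1..k}. cc k j \<bullet> \<zeta> j \<omega>)"
    unfolding aa_def cc_def by (simp add: sum.distrib distrib_left sum_distrib_left)
  finally show ?thesis .
qed

lemma zeta_meas: "j \<ge> 1 \<Longrightarrow> \<zeta> j \<in> borel_measurable M"
  using distributed_measurable[OF gauss] by (simp add: measurable_lborel2)

lemma X_meas: "X k \<in> borel_measurable M"
proof (cases "k \<ge> 1")
  case True
  have "(\<lambda>\<omega>. aa k + (\<Sum>j\<in>{1..k}. cc k j \<bullet> \<zeta> j \<omega>)) \<in> borel_measurable M"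
    using zeta_meas by (intro borel_measurable_add borel_measurable_const borel_measurable_sum) auto
  moreover have "X k = (\<lambda>\<omega>. aa k + (\<Sum>j\<in>{1..k}. cc k j \<bullet> \<zeta> j \<omega>))"
    using X_repr[OF True] by (intro ext) simp
  ultimately show ?thesis by simp
next
  case False then have "k = 0" by simp
  then show ?thesis by (simp add: X_def[abs_def])
qed

lemma X_mgf:
  assumes k: "k \<ge> 1"
  shows "integrable M (\<lambda>\<omega>. exp (lam * X k \<omega>))"
    "(\<integral>\<omega>. exp (lam * X k \<omega>) \<partial>M) = exp (lam * aa k + lam^2 * ss k / 2)"
proof -
  have eq: "exp (lam * X k \<omega>) = exp (lam * aa k) * (\<Prod>j\<in>{1..k}. exp ((lam *\<^sub>R cc k j) \<bullet> \<zeta> j \<omega>))" for \<omega>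
    unfolding X_repr[OF k] by (simp add: distrib_left sum_distrib_left exp_add exp_sum)
  note im = indep_mgf[OF P S_pd indep gauss, of "{1..k}" "\<lambda>j. lam *\<^sub>R cc k j"]
  show "integrable M (\<lambda>\<omega>. exp (lam * X k \<omega>))"
    unfolding eq using im(1) by (intro integrable_mult_right) auto
  have "(\<integral>\<omega>. exp (lam * X k \<omega>) \<partial>M) = exp (lam * aa k) * (\<Prod>j\<in>{1..k}. exp ((lam *\<^sub>R cc k j) \<bullet> (S *v (lam *\<^sub>R cc k j)) / 2))"
    unfolding eq using im(2) by auto
  also have "\<dots> = exp (lam * aa k + lam^2 * ss k / 2)"
    unfolding ss_def by (simp add: exp_add exp_sum[symmetric] sum_divide_distrib sum_distrib_left matrix_vector_mult_scaleR power2_eq_square algebra_simps)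
  finally show "(\<integral>\<omega>. exp (lam * X k \<omega>) \<partial>M) = exp (lam * aa k + lam^2 * ss k / 2)" .
qed

end




lemma row_mult: "(A ** B) $ i = transpose B *v (A $ i)" for A B :: "real^'n^'n"
  by (simp add: vec_eq_iff matrix_matrix_mult_def matrix_vector_mult_def transpose_def mult.commute)

lemma good_sum: "good w A \<Longrightarrow> (\<Sum>a\<in>UNIV. (A *v z) $ a) = (\<Sum>a\<in>UNIV. z $ a)"
proof -
  assume g: "good w A"
  have sym: "transpose A = A" and rs: "\<And>a. (\<Sum>b\<in>UNIV. A$a$b) = 1" using g by (auto simp: good_def)
  have cs: "(\<Sum>a\<in>UNIV. A$a$b) = 1" for b using rs[of b] sym_entry[OF sym] by simp
  have "(\<Sum>a\<in>UNIV. (A *v z) $ a) = (\<Sum>b\<in>UNIV. (\<Sum>a\<in>UNIV. A$a$b) * z$b)"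
    by (simp add: matrix_vector_mult_def sum_distrib_right) (rule sum.swap)
  then show ?thesis using cs by simp
qed

definition ones :: "real^'n" where "ones = (\<chi> a. 1)"

lemma good_ones: "good w A \<Longrightarrow> A *v ones = ones"
  by (simp add: good_def vec_eq_iff matrix_vector_mult_def ones_def)

context setting
begin

definition "u0 = (1 / real CARD('n)) *\<^sub>R (ones :: real^'n)"
definition "dev j n = rr j n - u0"
definition "\<rho> = 1 - 1 / cst Wmin B (real CARD('n))"

lemma W_good: "k \<ge> 1 \<Longrightarrow> good Wmin (W k)"
  unfolding good_def using W_sym W_nonneg W_stoch W_diag W_off by auto

lemma rr_0: "rr j 0 = axis i 1"
  by (simp add: rr_def vec_eq_iff axis_def mat_def)

lemma rr_Suc: "j \<ge> 1 \<Longrightarrow> rr j (Suc n) = W j *v rr (Suc j) n"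
  unfolding rr_def Pm_Suc_left row_mult using W_sym by simp

lemma rr_sum: "j \<ge> 1 \<Longrightarrow> (\<Sum>a\<in>UNIV. rr j n $ a) = 1"
proof (induction n arbitrary: j)
  case 0 then show ?case by (simp add: rr_0 axis_def)
next
  case (Suc n) then show ?case using rr_Suc good_sum[OF W_good] by simp
qed

lemma u0_sum: "(\<Sum>a\<in>UNIV. u0 $ a) = 1"
  by (simp add: u0_def ones_def)

lemma dev_sum: "j \<ge> 1 \<Longrightarrow> (\<Sum>a\<in>UNIV. dev j n $ a) = 0"
  using rr_sum u0_sum by (simp add: dev_def sum_subtractf)

lemma dev_Suc: "j \<ge> 1 \<Longrightarrow> dev j (Suc n) = W j *v dev (Suc j) n"
proof -
  assume j: "j \<ge> 1"
  have "W j *v u0 = u0" using good_ones[OF W_good[OF j]] by (simp add: u0_def matrix_vector_mult_scaleR)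
  then show ?thesis using rr_Suc[OF j] by (simp add: dev_def matrix_vector_mult_diff_distrib)
qed

lemma dev_mono: "j \<ge> 1 \<Longrightarrow> (norm (dev j (Suc n)))^2 \<le> (norm (dev (Suc j) n))^2"
proof -
  assume j: "j \<ge> 1"
  have "(norm (dev j (Suc n)))^2 \<le> (norm (dev (Suc j) n))^2 - Wmin * Qf (W j) (dev (Suc j) n)"
    using good_contract[OF W_good[OF j]] dev_Suc[OF j] by simp
  moreover have "0 \<le> Qf (W j) (dev (Suc j) n)" using W_nonneg j by (intro Qf_nonneg) auto
  ultimately show ?thesis using Wmin by (smt (verit) mult_nonneg_nonneg)
qed

lemma dev_0: "(norm (dev j 0))^2 \<le> 1"
proof -
  let ?N = "real CARD('n)"
  have "(norm (dev j 0))^2 = (\<Sum>a\<in>UNIV. (axis i 1 $ a - 1 / ?N)^2)"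
    by (simp add: norm2_sum dev_def rr_0 u0_def ones_def)
  also have "\<dots> = (\<Sum>a\<in>UNIV. (axis i 1 $ a)^2) - 2 / ?N * (\<Sum>a\<in>UNIV. axis i (1::real) $ a) + ?N * (1/?N)^2"
    by (simp add: power2_diff sum.distrib sum_subtractf sum_distrib_left sum_divide_distrib algebra_simps)
  also have "(\<Sum>a\<in>UNIV. (axis i (1::real) $ a)^2) = 1"
  proof -
    have "(\<Sum>a\<in>UNIV. (axis i (1::real) $ a)^2) = (\<Sum>a\<in>UNIV. axis i (1::real) $ a)"
      by (intro sum.cong) (auto simp: axis_def)
    then show ?thesis by (simp add: axis_def)
  qed
  also have "(\<Sum>a\<in>UNIV. axis i (1::real) $ a) = 1" by (simp add: axis_def)
  finally have "(norm (dev j 0))^2 = 1 - 1 / ?N" by (simp add: power2_eq_square field_simps)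
  then show ?thesis by simp
qed

lemma dev_le1: "j \<ge> 1 \<Longrightarrow> (norm (dev j n))^2 \<le> 1"
proof (induction n arbitrary: j)
  case 0 then show ?case using dev_0 by simp
next
  case (Suc n)
  have "(norm (dev (Suc j) n))^2 \<le> 1" using Suc.IH[of "Suc j"] by simp
  then show ?case using dev_mono[OF Suc.prems, of n] by linarith
qed

lemma rho_bounds: "1/2 \<le> \<rho>" "\<rho> < 1"
proof -
  have "cst Wmin B (real CARD('n)) \<ge> 2" unfolding cst_def using Wmin by simp
  then show "1/2 \<le> \<rho>" "\<rho> < 1" unfolding \<rho>_def by (auto simp: field_simps)
qed

lemma dev_window: "j \<ge> 2 \<Longrightarrow> (norm (dev j (n + B)))^2 \<le> \<rho> * (norm (dev (j + B) n))^2"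
proof -
  assume j: "j \<ge> 2"
  define y where "y t = dev (j + B - t) (n + t)" for t
  define A where "A t = W (j + B - Suc t)" for t
  have "(norm (y B))^2 \<le> (1 - 1 / cst Wmin B (real CARD('n))) * (norm (y 0))^2"
  proof (rule window)
    show "good Wmin (A t)" if "t < B" for t unfolding A_def using that j by (intro W_good) auto
    show "0 < Wmin" using Wmin by simp
    show "y (Suc t) = A t *v y t" if "t < B" for t
    proof -
      have e: "Suc (j + B - Suc t) = j + B - t" using that by simp
      have "y (Suc t) = dev (j + B - Suc t) (Suc (n + t))" by (simp add: y_def)
      also have "\<dots> = A t *v y t" using dev_Suc[of "j + B - Suc t" "n + t"] that j e by (simp add: A_def y_def)
      finally show ?thesis .
    qed
    show "(\<Sum>a\<in>UNIV. y 0 $ a) = 0" unfolding y_def using j by (intro dev_sum) auto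
    show "(a, b) \<in> {(a, b). a \<noteq> b \<and> (\<exists>t<B. 0 < A t $ a $ b)}\<^sup>*" for a b
    proof -
      have sub: "{(a, b). a \<noteq> b \<and> (\<exists>l\<in>{(j-1)+1..(j-1)+B}. W l $ a $ b > 0)} \<subseteq> {(a, b). a \<noteq> b \<and> (\<exists>t<B. 0 < A t $ a $ b)}"
      proof clarify
        fix a b l assume ab: "a \<noteq> b" "l \<in> {(j-1)+1..(j-1)+B}" "W l $ a $ b > 0"
        have "j + B - 1 - l < B" "j + B - Suc (j + B - 1 - l) = l" using ab(2) j B_pos by auto
        then show "\<exists>t<B. 0 < A t $ a $ b" using ab(3) unfolding A_def by metis
      qed
      have "(a, b) \<in> {(a, b). a \<noteq> b \<and> (\<exists>l\<in>{(j-1)+1..(j-1)+B}. W l $ a $ b > 0)}\<^sup>*"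
        using conn[of "j - 1" a b] j by simp
      then show ?thesis using rtrancl_mono[OF sub] by blast
    qed
  qed
  then show ?thesis by (simp add: y_def \<rho>_def)
qed

lemma dev_decay2: "j \<ge> 2 \<Longrightarrow> (norm (dev j n))^2 \<le> \<rho> ^ (n div B)"
proof (induction n arbitrary: j rule: less_induct)
  case (less n)
  show ?case
  proof (cases "n < B")
    case True
    then show ?thesis using dev_le1[of j n] less.prems by simp
  next
    case False
    then obtain n' where n': "n = n' + B" by (metis add.commute le_add_diff_inverse not_less)
    have "n' < n" using n' B_pos by simp
    have "(norm (dev j n))^2 \<le> \<rho> * (norm (dev (j + B) n'))^2" using dev_window[OF less.prems] n' by simp
    also have "\<dots> \<le> \<rho> * \<rho> ^ (n' div B)"
      using less.IH[OF \<open>n' < n\<close>, of "j + B"] less.prems rho_bounds by (intro mult_left_mono) auto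
    also have "\<dots> = \<rho> ^ (n div B)" using n' B_pos by simp
    finally show ?thesis .
  qed
qed

lemma dev_decay: "j \<ge> 1 \<Longrightarrow> (norm (dev j n))^2 \<le> \<rho> ^ ((n - 1) div B)"
proof -
  assume j: "j \<ge> 1"
  show ?thesis
  proof (cases "j \<ge> 2")
    case True
    have "\<rho> ^ (n div B) \<le> \<rho> ^ ((n - 1) div B)"
      using rho_bounds by (intro power_decreasing div_le_mono) auto
    then show ?thesis using dev_decay2[OF True, of n] by simp
  next
    case False
    then have j1: "j = 1" using j by simp
    show ?thesis
    proof (cases n)
      case 0 then show ?thesis using dev_le1[OF j] by simp
    next
      case (Suc n')
      have "(norm (dev j n))^2 \<le> (norm (dev 2 n'))^2" using dev_mono[of 1 n'] j1 Suc by (simp add: numeral_2_eq_2)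
      also have "\<dots> \<le> \<rho> ^ (n' div B)" by (rule dev_decay2) simp
      finally show ?thesis using Suc by simp
    qed
  qed
qed

end




lemma sum_rev_index: "(\<Sum>j\<in>{1..k}. f (k - j)) = (\<Sum>n<k. f n)" for f :: "nat \<Rightarrow> real"
  by (rule sum.reindex_bij_witness[of _ "\<lambda>n. k - n" "\<lambda>j. k - j"]) auto

lemma limit_by_rate:
  fixes f :: "nat \<Rightarrow> real"
  assumes "\<And>k. k \<ge> 1 \<Longrightarrow> \<bar>f k - L\<bar> \<le> C / real k"
  shows "f \<longlonglongrightarrow> L"
proof -
  have "(\<lambda>k. C / real k) \<longlonglongrightarrow> 0"
    by (rule tendsto_divide_0[OF tendsto_const filterlim_at_top_imp_at_infinity[OF filterlim_real_sequentially]])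
  moreover have "eventually (\<lambda>k. norm (f k - L) \<le> C / real k) sequentially"
    using assms by (auto simp: eventually_sequentially)
  ultimately have "(\<lambda>k. f k - L) \<longlonglongrightarrow> 0" by (rule Lim_null_comparison[rotated])
  then show ?thesis by (rule LIM_zero_cancel)
qed

lemma geo_bound:
  fixes \<tau> :: real and B :: nat
  assumes t: "0 < \<tau>" "\<tau> < 1" and B: "B \<ge> 1"
  shows "\<exists>K. \<forall>k. (\<Sum>n<k. \<tau> ^ ((n - 1) div B)) \<le> K"
proof -
  define q where "q = \<tau> powr (1 / real B)"
  have q0: "0 < q" using t by (simp add: q_def)
  have q1: "q < 1" unfolding q_def powr_def using t B
    by (simp add: ln_less_zero mult_neg_pos divide_neg_pos)
  have tb: "\<tau> ^ ((n - 1) div B) \<le> q ^ n / \<tau>" for n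
  proof -
    define m where "m = (n - 1) div B"
    have "real n - real B \<le> real B * real m"
    proof -
      have "n - 1 = B * m + (n - 1) mod B" by (simp add: m_def)
      moreover have "(n - 1) mod B < B" using B by simp
      ultimately have "n - 1 < B * m + B" by linarith
      then have "n \<le> B * m + B" by linarith
      then have "real n \<le> real B * real m + real B" by (metis of_nat_add of_nat_le_iff of_nat_mult)
      then show ?thesis by simp
    qed
    then have ex: "real n / real B - 1 \<le> real m" using B by (simp add: field_simps)
    have "\<tau> ^ m = \<tau> powr real m" using t by (simp add: powr_realpow)
    also have "\<dots> \<le> \<tau> powr (real n / real B - 1)" using ex t by (intro powr_mono') auto
    also have "\<dots> = (\<tau> powr (1 / real B)) powr real n / \<tau>"
      using t by (simp add: powr_diff powr_powr)
    also have "\<dots> = q ^ n / \<tau>" using q0 by (simp add: q_def powr_realpow)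
    finally show ?thesis by (simp add: m_def)
  qed
  have "(\<Sum>n<k. \<tau> ^ ((n - 1) div B)) \<le> 1 / (\<tau> * (1 - q))" for k
  proof -
    have "(\<Sum>n<k. \<tau> ^ ((n - 1) div B)) \<le> (\<Sum>n<k. q ^ n / \<tau>)" by (intro sum_mono tb)
    also have "\<dots> = (1 - q ^ k) / (1 - q) / \<tau>" using q1 by (simp add: sum_divide_distrib[symmetric] sum_gp_strict)
    also have "\<dots> \<le> 1 / (1 - q) / \<tau>" using q0 q1 t by (intro divide_right_mono) (auto simp: field_simps)
    finally show ?thesis by (simp add: mult.commute)
  qed
  then show ?thesis by blast
qed

context setting
begin

definition "\<tau> = sqrt \<rho>"
definition "dd = m1 - m0"
definition "\<sigma>2 = dd \<bullet> (matrix_inv S *v dd)"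
definition "mL = (-1) ^ (l + 1) / 2 * \<sigma>2"
definition "\<beta> x y = (\<Sum>a\<in>UNIV. \<Sum>b\<in>UNIV. x$a * vv$a * S$a$b * vv$b * y$b)"

lemma tau_bounds: "0 < \<tau>" "\<tau> < 1"
  using rho_bounds by (auto simp: \<tau>_def)

lemma dev_norm: "j \<ge> 1 \<Longrightarrow> norm (dev j n) \<le> \<tau> ^ ((n - 1) div B)"
proof -
  assume j: "j \<ge> 1"
  have "norm (dev j n) = sqrt ((norm (dev j n))^2)" by simp
  also have "\<dots> \<le> sqrt (\<rho> ^ ((n - 1) div B))" using dev_decay[OF j] by (simp only: real_sqrt_le_mono)
  also have "\<dots> = \<tau> ^ ((n - 1) div B)" by (simp add: \<tau>_def real_sqrt_power)
  finally show ?thesis .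
qed

lemma dev_sum_bound: "\<exists>K. \<forall>k. (\<Sum>j\<in>{1..k}. norm (dev j (k - j))) \<le> K"
proof -
  obtain K where K: "\<And>k. (\<Sum>n<k. \<tau> ^ ((n - 1) div B)) \<le> K"
    using geo_bound[OF tau_bounds B_pos] by blast
  have "(\<Sum>j\<in>{1..k}. norm (dev j (k - j))) \<le> K" for k
  proof -
    have "(\<Sum>j\<in>{1..k}. norm (dev j (k - j))) \<le> (\<Sum>j\<in>{1..k}. \<tau> ^ ((k - j - 1) div B))"
      by (rule sum_mono, rule dev_norm) auto
    also have "\<dots> = (\<Sum>n<k. \<tau> ^ ((n - 1) div B))"
      using sum_rev_index[of "\<lambda>n. \<tau> ^ ((n - 1) div B)" k] by simp
    finally show ?thesis using K[of k] by simp
  qed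
  then show ?thesis by blast
qed

lemma sigma_pos: "\<sigma>2 > 0"
proof -
  define w where "w = matrix_inv S *v dd"
  have Sw: "S *v w = dd" using inv_apply[OF S_pd] by (simp add: w_def)
  have "dd \<noteq> 0" using m_ne by (simp add: dd_def)
  then have "w \<noteq> 0" using Sw by auto
  then have "0 < w \<bullet> (S *v w)" using S_pd by (simp add: pos_def_mat_def)
  then show ?thesis using Sw by (simp add: \<sigma>2_def w_def inner_commute)
qed

lemma vv_sigma: "vv \<bullet> dd = \<sigma>2" "vv \<bullet> (S *v vv) = \<sigma>2"
  using inv_apply[OF S_pd] by (simp_all add: vv_def \<sigma>2_def dd_def inner_commute)

lemma sum_bb: "(\<Sum>a\<in>UNIV. bb $ a) = mL"
proof -
  have "(\<Sum>a\<in>UNIV. bb $ a) = (if l = 0 then - 1/2 else 1/2) * (vv \<bullet> dd)"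
    using l01 by (auto simp: bb_def ml_def dd_def inner_vec_def sum_distrib_left algebra_simps sum_divide_distrib[symmetric]
         intro!: sum.cong)
  then show ?thesis using l01 vv_sigma by (auto simp: mL_def)
qed

lemma aa_lim: "aa \<longlonglongrightarrow> mL"
proof -
  let ?N = "real CARD('n)"
  obtain K where K: "\<And>k. (\<Sum>j\<in>{1..k}. norm (dev j (k - j))) \<le> K" using dev_sum_bound by blast
  have u0bb: "u0 \<bullet> bb = mL / ?N" using sum_bb by (simp add: u0_def ones_def inner_vec_def sum_divide_distrib[symmetric])
  show ?thesis
  proof (rule limit_by_rate[where C="?N * norm bb * K"])
    fix k :: nat assume k: "k \<ge> 1"
    have "aa k = ?N / real k * (\<Sum>j\<in>{1..k}. dev j (k - j) \<bullet> bb + u0 \<bullet> bb)"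
      unfolding aa_def dev_def by (simp add: inner_diff_left)
    also have "\<dots> = ?N / real k * (\<Sum>j\<in>{1..k}. dev j (k - j) \<bullet> bb) + mL"
      using k u0bb by (simp add: sum.distrib field_simps)
    finally have e: "aa k - mL = ?N / real k * (\<Sum>j\<in>{1..k}. dev j (k - j) \<bullet> bb)" by simp
    have "\<bar>\<Sum>j\<in>{1..k}. dev j (k - j) \<bullet> bb\<bar> \<le> (\<Sum>j\<in>{1..k}. norm (dev j (k - j)) * norm bb)"
      by (rule order_trans[OF sum_abs sum_mono]) (rule Cauchy_Schwarz_ineq2)
    also have "\<dots> = norm bb * (\<Sum>j\<in>{1..k}. norm (dev j (k - j)))" by (simp add: sum_distrib_left mult.commute)
    also have "\<dots> \<le> norm bb * K" using K by (intro mult_left_mono) auto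
    finally have "\<bar>aa k - mL\<bar> \<le> ?N / real k * (norm bb * K)"
      unfolding e abs_mult using k by (intro mult_mono) auto
    then show "\<bar>aa k - mL\<bar> \<le> ?N * norm bb * K / real k" by simp
  qed
qed

lemma cc_form: "cc k j \<bullet> (S *v cc k j) = (real CARD('n) / real k)^2 * \<beta> (rr j (k - j)) (rr j (k - j))"
  unfolding cc_def \<beta>_def
  by (simp add: inner_vec_def matrix_vector_mult_def sum_distrib_left power2_eq_square algebra_simps)

lemma beta_expand: "\<beta> (u + d) (u + d) = \<beta> u u + \<beta> u d + \<beta> d u + \<beta> d d"
  unfolding \<beta>_def by (simp add: algebra_simps sum.distrib)

lemma beta_bound: "\<bar>\<beta> x y\<bar> \<le> (\<Sum>a\<in>UNIV. \<Sum>b\<in>UNIV. \<bar>vv$a * S$a$b * vv$b\<bar>) * norm x * norm y"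
proof -
  have "\<bar>\<beta> x y\<bar> \<le> (\<Sum>a\<in>UNIV. \<Sum>b\<in>UNIV. \<bar>x$a * vv$a * S$a$b * vv$b * y$b\<bar>)"
    unfolding \<beta>_def by (rule order_trans[OF sum_abs sum_mono]) (rule sum_abs)
  also have "\<dots> \<le> (\<Sum>a\<in>UNIV. \<Sum>b\<in>UNIV. \<bar>vv$a * S$a$b * vv$b\<bar> * norm x * norm y)"
  proof (intro sum_mono)
    fix a b
    have "\<bar>x$a * vv$a * S$a$b * vv$b * y$b\<bar> = \<bar>vv$a * S$a$b * vv$b\<bar> * (\<bar>x$a\<bar> * \<bar>y$b\<bar>)"
      by (simp add: abs_mult)
    also have "\<dots> \<le> \<bar>vv$a * S$a$b * vv$b\<bar> * (norm x * norm y)"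
      by (intro mult_left_mono mult_mono component_le_norm_cart) auto
    finally show "\<bar>x$a * vv$a * S$a$b * vv$b * y$b\<bar> \<le> \<bar>vv$a * S$a$b * vv$b\<bar> * norm x * norm y"
      by (simp add: mult.assoc)
  qed
  also have "\<dots> = (\<Sum>a\<in>UNIV. \<Sum>b\<in>UNIV. \<bar>vv$a * S$a$b * vv$b\<bar>) * norm x * norm y"
    by (simp add: sum_distrib_right)
  finally show ?thesis .
qed

lemma beta_u0: "(real CARD('n))^2 * \<beta> u0 u0 = \<sigma>2"
proof -
  have "\<beta> u0 u0 = (1 / real CARD('n))^2 * (vv \<bullet> (S *v vv))"
    unfolding \<beta>_def u0_def ones_def
    by (simp add: inner_vec_def matrix_vector_mult_def sum_distrib_left power2_eq_square algebra_simps)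
  then show ?thesis using vv_sigma by (simp add: power2_eq_square)
qed

lemma ss_lim: "(\<lambda>k. real k * ss k) \<longlonglongrightarrow> \<sigma>2"
proof -
  let ?N = "real CARD('n)"
  define Kb where "Kb = (\<Sum>a\<in>UNIV. \<Sum>b\<in>UNIV. \<bar>vv$a * S$a$b * vv$b\<bar>)"
  have Kb0: "0 \<le> Kb" unfolding Kb_def by (intro sum_nonneg) auto
  define K2 where "K2 = Kb * (2 * norm u0 + 1)"
  obtain K where K: "\<And>k. (\<Sum>j\<in>{1..k}. norm (dev j (k - j))) \<le> K" using dev_sum_bound by blast
  have bdiff: "\<bar>\<beta> (rr j n) (rr j n) - \<beta> u0 u0\<bar> \<le> K2 * norm (dev j n)" if j: "j \<ge> 1" for j n
  proof -
    let ?d = "dev j n"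
    have r: "rr j n = u0 + ?d" by (simp add: dev_def)
    have d1: "norm ?d \<le> 1" using dev_le1[OF j, of n] by (simp add: power_le_one_iff)
    have "\<beta> (rr j n) (rr j n) - \<beta> u0 u0 = \<beta> u0 ?d + \<beta> ?d u0 + \<beta> ?d ?d"
      unfolding r beta_expand by simp
    then have "\<bar>\<beta> (rr j n) (rr j n) - \<beta> u0 u0\<bar> \<le> \<bar>\<beta> u0 ?d\<bar> + \<bar>\<beta> ?d u0\<bar> + \<bar>\<beta> ?d ?d\<bar>" by simp
    also have "\<dots> \<le> Kb * norm u0 * norm ?d + Kb * norm ?d * norm u0 + Kb * norm ?d * norm ?d"
      using beta_bound[of u0 ?d] beta_bound[of ?d u0] beta_bound[of ?d ?d] unfolding Kb_def by linarith
    also have "Kb * norm ?d * norm ?d \<le> Kb * norm ?d * 1"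
      using Kb0 d1 by (intro mult_left_mono) auto
    finally show ?thesis by (simp add: K2_def algebra_simps)
  qed
  have K20: "0 \<le> K2" using Kb0 by (simp add: K2_def)
  show ?thesis
  proof (rule limit_by_rate[where C="?N^2 * K2 * K"])
    fix k :: nat assume k: "k \<ge> 1"
    have "real k * ss k = ?N^2 / real k * (\<Sum>j\<in>{1..k}. \<beta> (rr j (k - j)) (rr j (k - j)))"
      unfolding ss_def cc_form using k by (simp add: sum_distrib_left power2_eq_square field_simps)
    moreover have "\<sigma>2 = ?N^2 / real k * (\<Sum>j\<in>{1..k}. \<beta> u0 u0)"
      using k beta_u0 by simp
    ultimately have e: "real k * ss k - \<sigma>2 = ?N^2 / real k * (\<Sum>j\<in>{1..k}. \<beta> (rr j (k - j)) (rr j (k - j)) - \<beta> u0 u0)"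
      by (simp add: right_diff_distrib sum_subtractf)
    have "\<bar>\<Sum>j\<in>{1..k}. \<beta> (rr j (k - j)) (rr j (k - j)) - \<beta> u0 u0\<bar> \<le> (\<Sum>j\<in>{1..k}. K2 * norm (dev j (k - j)))"
      by (rule order_trans[OF sum_abs sum_mono]) (rule bdiff, simp)
    also have "\<dots> \<le> K2 * K" using K K20 by (simp add: sum_distrib_left[symmetric] mult_left_mono)
    finally have "\<bar>real k * ss k - \<sigma>2\<bar> \<le> ?N^2 / real k * (K2 * K)"
      unfolding e abs_mult using k by (intro mult_mono) auto
    then show "\<bar>real k * ss k - \<sigma>2\<bar> \<le> ?N^2 * K2 * K / real k" by simp
  qed
qed

end


theorem theorem9:
  fixes M :: "'w measure"
    and \<zeta> :: "nat \<Rightarrow> 'w \<Rightarrow> real^'n"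
    and S :: "real^'n^'n"
    and m0 m1 :: "real^'n"
    and W :: "nat \<Rightarrow> real^'n^'n"
    and Wmin :: real
    and B :: nat
  assumes "prob_space M"
    and S_pd: "pos_def_mat S"
    and m_ne: "m0 \<noteq> m1"
    and indep: "prob_space.indep_vars M (\<lambda>_. borel) \<zeta> {1..}"
    and gauss: "\<And>k. k \<ge> 1 \<Longrightarrow> distributed M lborel (\<zeta> k) (\<lambda>x. ennreal (gauss_density S x))"
    and W_sym: "\<And>k. k \<ge> 1 \<Longrightarrow> transpose (W k) = W k"
    and W_nonneg: "\<And>k i j. k \<ge> 1 \<Longrightarrow> W k $ i $ j \<ge> 0"
    and W_stoch: "\<And>k i. k \<ge> 1 \<Longrightarrow> (\<Sum>j\<in>UNIV. W k $ i $ j) = 1"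
    and Wmin: "0 < Wmin" "Wmin < 1"
    and W_diag: "\<And>k i. k \<ge> 1 \<Longrightarrow> W k $ i $ i \<ge> Wmin"
    and W_off: "\<And>k i j. k \<ge> 1 \<Longrightarrow> i \<noteq> j \<Longrightarrow> W k $ i $ j > 0 \<Longrightarrow> W k $ i $ j \<ge> Wmin"
    and B_pos: "B \<ge> 1"
    and conn: "\<And>k i j. k \<ge> 1 \<Longrightarrow>
       (i, j) \<in> {(a, b). a \<noteq> b \<and> (\<exists>l\<in>{k+1..k+B}. W l $ a $ b > 0)}\<^sup>*"
    and l_range: "l \<in> {0::nat, 1}"
  shows "let d = m1 - m0;
             \<sigma>2 = d \<bullet> (matrix_inv S *v d);
             mL = (-1) ^ (l + 1) / 2 * \<sigma>2;
             ml = (if l = 0 then m0 else m1);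
             I = (\<lambda>t::real. (t - mL)\<^sup>2 / (2 * \<sigma>2));
             \<theta> = (\<lambda>k. distr M borel
                    (\<lambda>\<omega>. rcons W (\<lambda>j. eta_vec S m0 m1 (ml + \<zeta> j \<omega>)) k $ i))
         in satisfies_LDP \<theta> I \<and> good_rate_function I"
  proof -
  interpret setting M \<zeta> S m0 m1 W Wmin B l i
    by (rule setting.intro) (use assms in auto)
  interpret mgf_ctx M X aa ss mL \<sigma>2
    by (rule mgf_ctx.intro) (use P X_meas X_mgf aa_lim ss_lim sigma_pos in auto)
  have LDP: "satisfies_LDP (\<lambda>k. distr M borel (X k)) I" by (rule LDP)
  have GR: "good_rate_function I" by (rule good)
  have Xe: "(\<lambda>k. distr M borel (X k)) = (\<lambda>k. distr M borel
                    (\<lambda>\<omega>. rcons W (\<lambda>j. eta_vec S m0 m1 ((if l = 0 then m0 else m1) + \<zeta> j \<omega>)) k $ i))"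
    by (simp add: X_def[abs_def] ml_def)
  have Ie: "I = (\<lambda>t::real. (t - (-1) ^ (l + 1) / 2 * ((m1 - m0) \<bullet> (matrix_inv S *v (m1 - m0))))\<^sup>2 / (2 * ((m1 - m0) \<bullet> (matrix_inv S *v (m1 - m0)))))"
    by (rule ext) (simp add: Irate_def mL_def \<sigma>2_def dd_def)
  show ?thesis using LDP GR unfolding Let_def Xe Ie by simp
qed

end
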